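(* There is an uncountable collection $\mathcal{C}_1$ of classification functions $f:[0,1]^d\to\{0,1\}$ (with fixed $d\geq2$) such that for any neural network dimensions $\mathbf{N}=(N_L=1,N_{L-1},\dots,N_1,N_0=d)$ with $L\geq2$, any integer $r\geq 3(N_1+1)\cdots(N_{L-1}+1)$, any $\epsilon>0$, $\hat\epsilon\in(0,1/2)$ and $\mathcal{R}\in\mathcal{CF}^{\epsilon,\hat\epsilon}_r$, and any choice $*\in\{1,2,\infty\}$, there is an uncountable collection $\mathcal{C}_3$ of pairwise disjoint subsets of $\Omega^{\mathcal{NN}}$ such that for each $\hat\Omega\in\mathcal{C}_3$ the computational problem $\{\Xi^{\mathcal{NN}},\hat\Omega,\mathcal{M}^{\mathcal{NN}},\Lambda^{\mathcal{NN}}\}^{\Delta_1}$ has probabilistic strong breakdown epsilon satisfying $\epsilon^{\mathrm{s}}_{\mathbb{P}\mathrm{B}}(\mathrm{p})\geq 1/4-\hat\epsilon/2$ for all $\mathrm{p}\in[0,1/2)$.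
   Context: Neural networks: $\mathcal{NN}_{\mathbf{N},L}$ is the set of maps $\varphi=W^L\rho\cdots\rho W^1:\mathbb{R}^d\to\mathbb{R}$, $W^\ell:\mathbb{R}^{N_{\ell-1}}\to\mathbb{R}^{N_\ell}$ affine, $\rho(t)=\max\{0,t\}$ coordinatewise. $\mathcal{CF}_r$: all $\mathcal{R}:\mathbb{R}^r\times\mathbb{R}^r\to\mathbb{R}_+\cup\{\infty\}$ with $\mathcal{R}(v,w)=0$ iff $v=w$; $\mathcal{CF}^{\epsilon,\hat\epsilon}_r=\{\mathcal{R}\in\mathcal{CF}_r:\mathcal{R}(v,w)\leq\epsilon\Rightarrow\|v-w\|_\infty\leq\hat\epsilon\}$. $\operatorname{argmin}_{\epsilon,\,x\in X}g(x)=\{x\in X:g(x)\leq g(y)+\epsilon\ \forall y\in X\}$. $\mathcal{S}^f_\eta$: finite sets $\{x^1,\dots,x^m\}\subset[0,1]^d$ with $\min_{x^i\neq x^j}\|x^i-x^j\|_\infty\geq2\eta$ and $f(x^j+y)=f(x^j)$ whenever $\|y\|_\infty<\eta$. $\varepsilon'(n)=[(4n+3)(4n+4)]^{-1}$. The neural network problem: $\Omega^{\mathcal{NN}}$ is the set of training sets $\mathcal{T}=\{x^1,\dots,x^r\}\subset\mathbb{R}^d$ with $\mathcal{T}\in\mathcal{S}^f_{\varepsilon'(r)}$; $\mathcal{M}^{\mathcal{NN}}=\mathbb{R}^r$ with metric induced by $\|\cdot\|_*$; $\Xi^{\mathcal{NN}}(\mathcal{T})$ is the (possibly multivalued) set of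 vectors $\{\phi(x^i)\}_{i=1}^r$ with $\phi\in\operatorname{argmin}_{\epsilon,\,\varphi\in\mathcal{NN}_{\mathbf{N},L}}\mathcal{R}(\{\varphi(x^j)\}_{j=1}^r,\{f(x^j)\}_{j=1}^r)$; $\Lambda^{\mathcal{NN}}=\{f^{j,k}\}$, $f^{j,k}(\mathcal{T})=x^k_j$ ($1\leq j\leq d$, $1\leq k\leq r$). General framework: a computational problem $\{\Xi,\Omega,\mathcal{M},\Lambda\}$ consists of a set $\Omega$, a countable set $\Lambda=\{f_k\}$ of complex-valued functions on $\Omega$ separating points, a metric space $(\mathcal{M},d_\mathcal{M})$ and a (possibly multivalued) map $\Xi:\Omega\to\mathcal{M}$. A general algorithm is a map $\Gamma:\Omega\to\mathcal{M}\cup\{\mathrm{NH}\}$ such that for each $\iota$ there is a nonempty $\Lambda_\Gamma(\iota)\subset\Lambda$, finite whenever $\Gamma(\iota)\neq\mathrm{NH}$, with $\Gamma(\iota)$ uniquely determined by $\{f(\iota)\}_{f\in\Lambda_\Gamma(\iota)}$, and $\Lambda_\Gamma(\iota')=\Lambda_\Gamma(\iota)$ whenever $f(\iota')=f(\iota)$ for all $f\in\Lambda_\Gamma(\iota)$. Extend $d_\mathcal{M}$ by $d(\mathrm{NH},\mathrm{NH})=0$ and $d(x,y)=\infty$ if exactly one of $x,y$ is NH; set $T_\Gamma(\iota)=\sup\{m:f_m\in\Lambda_\Gamma(\iota)\}$ and $\mathrm{dist}(\Xi(\iota),y)=\inf_{x\in\Xi(\iota)}d_\mathcal{M}(x,y)$.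 A randomised general algorithm (RGA) is a triple $(X,\mathcal{F},\{\mathbb{P}_\iota\}_{\iota\in\Omega})$ with $X$ a set of general algorithms, $\mathcal{F}$ a sigma-algebra on $X$, and probability measures $\mathbb{P}_\iota$ on $\mathcal{F}$ such that: $\Gamma\mapsto\Gamma(\iota)$ is measurable into $\mathcal{M}\cup\{\mathrm{NH}\}$ with the Borel sigma-algebra; $\{\Gamma:T_\Gamma(\iota)\leq n\}\in\mathcal{F}$ for all $n,\iota$; and $\mathbb{P}_{\iota_1}(E)=\mathbb{P}_{\iota_2}(E)$ whenever $E\in\mathcal{F}$ is such that $f(\iota_1)=f(\iota_2)$ for all $\Gamma\in E$ and $f\in\Lambda_\Gamma(\iota_1)$. The probabilistic strong breakdown epsilon is $\epsilon^{\mathrm{s}}_{\mathbb{P}\mathrm{B}}(\mathrm{p})=\sup\{\epsilon\geq0:\text{for every RGA }\Gamma^{\mathrm{ran}}\ \exists\iota\in\Omega\text{ with }\mathbb{P}_\iota(\mathrm{dist}(\Xi(\iota),\Gamma^{\mathrm{ran}}(\iota))>\epsilon)>\mathrm{p}\}$. With $\Lambda=\{f_j\}_{j\in\beta}$ and $\mathbb{D}_n=\{k2^{-n}:k\in\mathbb{Z}\}$, the problem with $\Delta_1$-information $\{\Xi,\Omega,\mathcal{M},\Lambda\}^{\Delta_1}=\{\tilde\Xi,\tilde\Omega,\mathcal{M},\tilde\Lambda\}$ has $\tilde\Omega$ consisting of all $\tilde\iota=\{(f_{j,1}(\iota),f_{j,2}(\iota),\dots)\}_{j\in\beta}$ with $\iota\in\Omega$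 and $f_{j,n}:\Omega\to\mathbb{D}_n+i\mathbb{D}_n$ any functions with $\sup_j|f_{j,n}(\iota)-f_j(\iota)|\leq2^{-n}$ for all $\iota,n$; $\tilde\Xi(\tilde\iota)=\Xi(\iota)$ for the corresponding $\iota$; $\tilde\Lambda=\{\tilde f_{j,n}\}$ with $\tilde f_{j,n}(\tilde\iota)=f_{j,n}(\iota)$. *)

theory Defs
  imports "HOL-Probability.Probability"
begin

text \<open>Vectors in R^n are represented as functions nat => real that vanish
  at all indices >= n (coordinates are indexed 0..n-1).\<close>

type_synonym vec = "nat \<Rightarrow> real"

definition vecs :: "nat \<Rightarrow> vec set" where
  "vecs n = {x. \<forall>i\<ge>n. x i = 0}"

definition cube :: "nat \<Rightarrow> vec set" where
  "cube d = {x. (\<forall>i<d. 0 \<le> x i \<and> x i \<le> 1) \<and> (\<forall>i\<ge>d. x i = 0)}"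

definition linf :: "nat \<Rightarrow> vec \<Rightarrow> real" where
  "linf n v = Max (insert 0 ((\<lambda>i. \<bar>v i\<bar>) ` {..<n}))"

datatype norm_choice = Norm1 | Norm2 | NormInf

definition pnorm :: "norm_choice \<Rightarrow> nat \<Rightarrow> vec \<Rightarrow> real" where
  "pnorm s n v = (case s of
      Norm1 \<Rightarrow> (\<Sum>i<n. \<bar>v i\<bar>)
    | Norm2 \<Rightarrow> sqrt (\<Sum>i<n. (v i)\<^sup>2)
    | NormInf \<Rightarrow> linf n v)"

definition pdist :: "norm_choice \<Rightarrow> nat \<Rightarrow> vec \<Rightarrow> vec \<Rightarrow> real" where
  "pdist s n v w = pnorm s n (\<lambda>i. v i - w i)"

type_synonym layer = "(nat \<Rightarrow> nat \<Rightarrow> real) \<times> (nat \<Rightarrow> real)"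

definition aff :: "layer \<Rightarrow> nat \<Rightarrow> nat \<Rightarrow> vec \<Rightarrow> vec" where
  "aff W m n x = (\<lambda>i. if i < m then (\<Sum>j<n. fst W i j * x j) + snd W i else 0)"

definition relu :: "vec \<Rightarrow> vec" where
  "relu x = (\<lambda>i. max 0 (x i))"

text \<open>dims = [N_0, N_1, ..., N_L]; Ws = [W^1, ..., W^L];
  the map computed is W^L rho ... rho W^1.\<close>
fun nn_map :: "nat list \<Rightarrow> layer list \<Rightarrow> vec \<Rightarrow> vec" where
  "nn_map (n0 # n1 # ns) (W # Ws) x =
     (if Ws = [] then aff W n1 n0 x else nn_map (n1 # ns) Ws (relu (aff W n1 n0 x)))"
| "nn_map _ _ x = x"

definition NN :: "nat list \<Rightarrow> (vec \<Rightarrow> real) set" where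
  "NN dims = {(\<lambda>x. nn_map dims Ws x 0) | Ws. length Ws = length dims - 1}"

definition CF :: "nat \<Rightarrow> (vec \<Rightarrow> vec \<Rightarrow> ennreal) set" where
  "CF r = {R. \<forall>v\<in>vecs r. \<forall>w\<in>vecs r. (R v w = 0 \<longleftrightarrow> v = w)}"

definition CF_eps :: "nat \<Rightarrow> real \<Rightarrow> real \<Rightarrow> (vec \<Rightarrow> vec \<Rightarrow> ennreal) set" where
  "CF_eps r e eh = {R \<in> CF r. \<forall>v\<in>vecs r. \<forall>w\<in>vecs r.
       R v w \<le> ennreal e \<longrightarrow> linf r (\<lambda>i. v i - w i) \<le> eh}"

definition argmin_eps :: "real \<Rightarrow> 'a set \<Rightarrow> ('a \<Rightarrow> ennreal) \<Rightarrow> 'a set" where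
  "argmin_eps e X g = {x \<in> X. \<forall>y\<in>X. g x \<le> g y + ennreal e}"

text \<open>A classification function f : [0,1]^d -> {0,1}, normalised to 0 outside [0,1]^d.\<close>
definition classif :: "nat \<Rightarrow> (vec \<Rightarrow> real) \<Rightarrow> bool" where
  "classif d f \<longleftrightarrow> (\<forall>x\<in>cube d. f x \<in> {0, 1}) \<and> (\<forall>x. x \<notin> cube d \<longrightarrow> f x = 0)"

definition S_f :: "nat \<Rightarrow> (vec \<Rightarrow> real) \<Rightarrow> real \<Rightarrow> vec set set" where
  "S_f d f \<eta> = {S. finite S \<and> S \<subseteq> cube d
     \<and> (\<forall>x\<in>S. \<forall>y\<in>S. x \<noteq> y \<longrightarrow> 2 * \<eta> \<le> linf d (\<lambda>i. x i - y i))
     \<and> (\<forall>x\<in>S. \<forall>y. linf d y < \<eta> \<and> (\<lambda>i. x i + y i) \<in> cube d \<longrightarrow> f (\<lambda>i. x i + y i) = f x)}"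

definition eps' :: "nat \<Rightarrow> real" where
  "eps' n = 1 / ((4 * real n + 3) * (4 * real n + 4))"

definition Omega_NN :: "nat \<Rightarrow> (vec \<Rightarrow> real) \<Rightarrow> nat \<Rightarrow> vec list set" where
  "Omega_NN d f r = {T. length T = r \<and> distinct T \<and> set T \<in> S_f d f (eps' r)}"

definition tuple :: "nat \<Rightarrow> vec list \<Rightarrow> (vec \<Rightarrow> real) \<Rightarrow> vec" where
  "tuple r T g = (\<lambda>i. if i < r then g (T ! i) else 0)"

definition Xi_NN :: "nat list \<Rightarrow> (vec \<Rightarrow> vec \<Rightarrow> ennreal) \<Rightarrow> real \<Rightarrow> (vec \<Rightarrow> real)
                      \<Rightarrow> nat \<Rightarrow> vec list \<Rightarrow> vec set" where
  "Xi_NN dims R e f r T =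
     {tuple r T \<phi> | \<phi>. \<phi> \<in> argmin_eps e (NN dims) (\<lambda>\<psi>. R (tuple r T \<psi>) (tuple r T f))}"

definition I_NN :: "nat \<Rightarrow> nat \<Rightarrow> (nat \<times> nat) set" where
  "I_NN d r = {(j, k). j < d \<and> k < r}"

definition Lambda_NN :: "nat \<times> nat \<Rightarrow> vec list \<Rightarrow> complex" where
  "Lambda_NN jk T = complex_of_real ((T ! snd jk) (fst jk))"

text \<open>A computational problem is given by Omega, the family of evaluation functions
  Lambda indexed by the index set I (enumerated by the injection en), a metric
  space (M, dM) and a multivalued Xi.  None plays the role of NH.
  A general algorithm is a pair (Gamma, Lambda_Gamma).\<close>

definition general_alg :: "'o set \<Rightarrow> ('i \<Rightarrow> 'o \<Rightarrow> complex) \<Rightarrow> 'i set \<Rightarrow> 'm set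
       \<Rightarrow> ('o \<Rightarrow> 'm option) \<Rightarrow> ('o \<Rightarrow> 'i set) \<Rightarrow> bool" where
  "general_alg \<Omega> \<Lambda> I M \<Gamma> L \<longleftrightarrow>
     (\<forall>\<iota>\<in>\<Omega>. L \<iota> \<noteq> {} \<and> L \<iota> \<subseteq> I \<and> (\<Gamma> \<iota> \<noteq> None \<longrightarrow> finite (L \<iota>))
              \<and> (\<forall>m. \<Gamma> \<iota> = Some m \<longrightarrow> m \<in> M)) \<and>
     (\<forall>\<iota>\<in>\<Omega>. \<forall>\<iota>'\<in>\<Omega>. (\<forall>j\<in>L \<iota>. \<Lambda> j \<iota>' = \<Lambda> j \<iota>) \<longrightarrow> L \<iota>' = L \<iota> \<and> \<Gamma> \<iota>' = \<Gamma> \<iota>)"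

definition T_alg :: "('i \<Rightarrow> nat) \<Rightarrow> ('o \<Rightarrow> 'i set) \<Rightarrow> 'o \<Rightarrow> enat" where
  "T_alg en L \<iota> = Sup ((\<lambda>j. enat (en j)) ` L \<iota>)"

definition metric_open :: "'m set \<Rightarrow> ('m \<Rightarrow> 'm \<Rightarrow> real) \<Rightarrow> 'm set \<Rightarrow> bool" where
  "metric_open M dM U \<longleftrightarrow> U \<subseteq> M \<and> (\<forall>x\<in>U. \<exists>e>0. \<forall>y\<in>M. dM x y < e \<longrightarrow> y \<in> U)"

definition metric_borel :: "'m set \<Rightarrow> ('m \<Rightarrow> 'm \<Rightarrow> real) \<Rightarrow> 'm set set" where
  "metric_borel M dM = sigma_sets M {U. metric_open M dM U}"

text \<open>Borel sets of M \<union> {NH} (NH isolated).\<close>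
definition opt_borel :: "'m set \<Rightarrow> ('m \<Rightarrow> 'm \<Rightarrow> real) \<Rightarrow> 'm option set set" where
  "opt_borel M dM = {A. A \<subseteq> insert None (Some ` M) \<and> {x \<in> M. Some x \<in> A} \<in> metric_borel M dM}"

definition RGA :: "'o set \<Rightarrow> ('i \<Rightarrow> 'o \<Rightarrow> complex) \<Rightarrow> 'i set \<Rightarrow> ('i \<Rightarrow> nat)
       \<Rightarrow> 'm set \<Rightarrow> ('m \<Rightarrow> 'm \<Rightarrow> real)
       \<Rightarrow> (('o \<Rightarrow> 'm option) \<times> ('o \<Rightarrow> 'i set)) set
       \<Rightarrow> (('o \<Rightarrow> 'm option) \<times> ('o \<Rightarrow> 'i set)) set set
       \<Rightarrow> ('o \<Rightarrow> (('o \<Rightarrow> 'm option) \<times> ('o \<Rightarrow> 'i set)) measure) \<Rightarrow> bool" where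
  "RGA \<Omega> \<Lambda> I en M dM X F P \<longleftrightarrow>
     (\<forall>G\<in>X. general_alg \<Omega> \<Lambda> I M (fst G) (snd G)) \<and>
     sigma_algebra X F \<and>
     (\<forall>\<iota>\<in>\<Omega>. space (P \<iota>) = X \<and> sets (P \<iota>) = F \<and> prob_space (P \<iota>)) \<and>
     (\<forall>\<iota>\<in>\<Omega>. \<forall>A\<in>opt_borel M dM. {G \<in> X. fst G \<iota> \<in> A} \<in> F) \<and>
     (\<forall>\<iota>\<in>\<Omega>. \<forall>n::nat. {G \<in> X. T_alg en (snd G) \<iota> \<le> enat n} \<in> F) \<and>
     (\<forall>\<iota>1\<in>\<Omega>. \<forall>\<iota>2\<in>\<Omega>. \<forall>E\<in>F.
        (\<forall>G\<in>E. \<forall>j\<in>snd G \<iota>1. \<Lambda> j \<iota>1 = \<Lambda> j \<iota>2) \<longrightarrow> measure (P \<iota>1) E = measure (P \<iota>2) E)"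

text \<open>dist(Xi(iota), y) with d(x, NH) = infinity.\<close>
definition dist_set :: "('m \<Rightarrow> 'm \<Rightarrow> real) \<Rightarrow> 'm set \<Rightarrow> 'm option \<Rightarrow> ereal" where
  "dist_set dM S y = (INF x\<in>S. (case y of None \<Rightarrow> \<infinity> | Some z \<Rightarrow> ereal (dM x z)))"

definition breakdown_PB :: "'o set \<Rightarrow> ('o \<Rightarrow> 'm set) \<Rightarrow> 'm set \<Rightarrow> ('m \<Rightarrow> 'm \<Rightarrow> real)
       \<Rightarrow> ('i \<Rightarrow> 'o \<Rightarrow> complex) \<Rightarrow> 'i set \<Rightarrow> ('i \<Rightarrow> nat) \<Rightarrow> real \<Rightarrow> ereal" where
  "breakdown_PB \<Omega> \<Xi> M dM \<Lambda> I en p = Sup {ereal e | e. 0 \<le> e \<and>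
      (\<forall>X F P. RGA \<Omega> \<Lambda> I en M dM X F P \<longrightarrow>
         (\<exists>\<iota>\<in>\<Omega>. p < measure (P \<iota>) {G \<in> X. ereal e < dist_set dM (\<Xi> \<iota>) (fst G \<iota>)}))}"

definition dyadic :: "nat \<Rightarrow> real set" where
  "dyadic n = {of_int k / 2 ^ n | k. True}"

definition dyadic_c :: "nat \<Rightarrow> complex set" where
  "dyadic_c n = {Complex a b | a b. a \<in> dyadic n \<and> b \<in> dyadic n}"

definition I_delta :: "'i set \<Rightarrow> ('i \<times> nat) set" where
  "I_delta I = I \<times> {n. 1 \<le> n}"

definition delta_repr :: "('i \<Rightarrow> 'o \<Rightarrow> complex) \<Rightarrow> 'i set \<Rightarrow> 'o \<Rightarrow> ('i \<times> nat \<Rightarrow> complex) \<Rightarrow> bool" where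
  "delta_repr \<Lambda> I \<iota> a \<longleftrightarrow>
     (\<forall>jn\<in>I_delta I. a jn \<in> dyadic_c (snd jn) \<and> cmod (a jn - \<Lambda> (fst jn) \<iota>) \<le> (1/2) ^ snd jn) \<and>
     (\<forall>jn. jn \<notin> I_delta I \<longrightarrow> a jn = 0)"

definition Omega_delta :: "'o set \<Rightarrow> ('i \<Rightarrow> 'o \<Rightarrow> complex) \<Rightarrow> 'i set \<Rightarrow> ('i \<times> nat \<Rightarrow> complex) set" where
  "Omega_delta \<Omega> \<Lambda> I = {a. \<exists>\<iota>\<in>\<Omega>. delta_repr \<Lambda> I \<iota> a}"

definition Xi_delta :: "'o set \<Rightarrow> ('i \<Rightarrow> 'o \<Rightarrow> complex) \<Rightarrow> 'i set \<Rightarrow> ('o \<Rightarrow> 'm set)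
       \<Rightarrow> ('i \<times> nat \<Rightarrow> complex) \<Rightarrow> 'm set" where
  "Xi_delta \<Omega> \<Lambda> I \<Xi> a = (\<Union>\<iota>\<in>{\<iota>\<in>\<Omega>. delta_repr \<Lambda> I \<iota> a}. \<Xi> \<iota>)"

definition Lambda_delta :: "'i \<times> nat \<Rightarrow> ('i \<times> nat \<Rightarrow> complex) \<Rightarrow> complex" where
  "Lambda_delta jn a = a jn"

end

theory Submission
  imports Defs
begin

lemma dist_set_None: "dist_set dM S None = \<infinity>"
  unfolding dist_set_def by (simp add: INF_eq_const top_ereal_def[symmetric]) 

lemma T_alg_finite:
  assumes "finite (L \<iota>)" shows "T_alg en L \<iota> \<le> enat (Max (insert 0 (en ` L \<iota>)))"
  unfolding T_alg_def using assms
  by (auto intro!: SUP_least Max_ge)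

lemma B_meas:
  fixes dM :: "'m \<Rightarrow> 'm \<Rightarrow> real"
  assumes tri: "\<And>x y z. dM x z \<le> dM x y + dM y z" and sym: "\<And>x y. dM x y = dM y x"
    and rga: "RGA \<Omega> \<Lambda> I en M dM X F P" and io: "\<iota> \<in> \<Omega>"
  shows "{G\<in>X. ereal e < dist_set dM S (fst G \<iota>)} \<in> F"
proof -
  define U where "U = {z\<in>M. ereal e < dist_set dM S (Some z)}"
  define A where "A = insert None (Some ` U)"
  have mo: "metric_open M dM U"
    unfolding metric_open_def
  proof (intro conjI ballI)
    show "U \<subseteq> M" unfolding U_def by auto
    fix z assume z: "z \<in> U"
    then have D: "ereal e < (INF x\<in>S. ereal (dM x z))" unfolding U_def dist_set_def by auto
    obtain e' where e': "ereal e < ereal e'" "ereal e' < (INF x\<in>S. ereal (dM x z))"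
      using ereal_dense2[OF D] by blast
    define \<epsilon> where "\<epsilon> = (e' - e) / 2"
    have ep: "\<epsilon> > 0" using e' unfolding \<epsilon>_def by auto
    have "\<forall>y\<in>M. dM z y < \<epsilon> \<longrightarrow> y \<in> U"
    proof (intro ballI impI)
      fix y assume yM: "y \<in> M" and dy: "dM z y < \<epsilon>"
      have "ereal e < ereal (e + \<epsilon>)" using ep by simp
      moreover have "ereal (e + \<epsilon>) \<le> (INF x\<in>S. ereal (dM x y))"
      proof (rule INF_greatest)
        fix x assume xS: "x \<in> S"
        have "ereal e' < ereal (dM x z)" using less_le_trans[OF e'(2) INF_lower[OF xS]] by simp
        then have "e' < dM x z" by simp
        moreover have "dM x z \<le> dM x y + dM y z" by (rule tri)
        moreover have "dM y z = dM z y" by (rule sym)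
        ultimately have "e + \<epsilon> \<le> dM x y" using dy unfolding \<epsilon>_def by (simp add: field_simps)
        then show "ereal (e + \<epsilon>) \<le> ereal (dM x y)" by simp
      qed
      ultimately have "ereal e < (INF x\<in>S. ereal (dM x y))" by (rule less_le_trans)
      then show "y \<in> U" unfolding U_def dist_set_def using yM by auto
    qed
    then show "\<exists>e>0. \<forall>y\<in>M. dM z y < e \<longrightarrow> y \<in> U" using ep by blast
  qed
  have "U \<in> metric_borel M dM" unfolding metric_borel_def
    using mo by (auto intro: sigma_sets.Basic)
  moreover have "{x\<in>M. Some x \<in> A} = U" unfolding A_def U_def by auto
  ultimately have Ab: "A \<in> opt_borel M dM" unfolding opt_borel_def A_def U_def by auto
  have "{G\<in>X. ereal e < dist_set dM S (fst G \<iota>)} = {G\<in>X. fst G \<iota> \<in> A}"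
  proof (intro Collect_cong conj_cong refl)
    fix G assume G: "G \<in> X"
    then have ga: "general_alg \<Omega> \<Lambda> I M (fst G) (snd G)" using rga unfolding RGA_def by blast
    show "ereal e < dist_set dM S (fst G \<iota>) \<longleftrightarrow> fst G \<iota> \<in> A"
    proof (cases "fst G \<iota>")
      case None then show ?thesis by (simp add: dist_set_None A_def)
    next
      case (Some z)
      have "\<forall>m. fst G \<iota> = Some m \<longrightarrow> m \<in> M" using ga io unfolding general_alg_def by blast
      then have "z \<in> M" using Some by blast
      then show ?thesis using Some unfolding A_def U_def by auto
    qed
  qed
  also have "\<dots> \<in> F"
  proof -
    have "\<forall>\<iota>\<in>\<Omega>. \<forall>A\<in>opt_borel M dM. {G \<in> X. fst G \<iota> \<in> A} \<in> F" using rga unfolding RGA_def by blast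
    then show ?thesis using io Ab by blast
  qed
  finally show ?thesis .
qed

lemma abstract_bd:
  fixes dM :: "'m \<Rightarrow> 'm \<Rightarrow> real" and \<Lambda> :: "'i \<Rightarrow> 'o \<Rightarrow> complex"
  assumes tri: "\<And>x y z. dM x z \<le> dM x y + dM y z" and sym: "\<And>x y. dM x y = dM y x"
    and inj: "inj_on en I" and a0: "a0 \<in> \<Omega>"
    and approx: "\<And>S. finite S \<Longrightarrow> S \<subseteq> I \<Longrightarrow> \<exists>a'\<in>\<Omega>. (\<forall>j\<in>S. \<Lambda> j a' = \<Lambda> j a0) \<and>
                     (\<forall>x\<in>\<Xi> a0. \<forall>y\<in>\<Xi> a'. c2 \<le> dM x y)"
    and e: "2 * e < c2" and p: "p < 1/2"
    and rga: "RGA \<Omega> \<Lambda> I en M dM X F P"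
  shows "\<exists>\<iota>\<in>\<Omega>. p < measure (P \<iota>) {G\<in>X. ereal e < dist_set dM (\<Xi> \<iota>) (fst G \<iota>)}"
proof (rule ccontr)
  define B where "B \<iota> = {G\<in>X. ereal e < dist_set dM (\<Xi> \<iota>) (fst G \<iota>)}" for \<iota>
  assume "\<not> ?thesis"
  then have H: "\<And>\<iota>. \<iota>\<in>\<Omega> \<Longrightarrow> measure (P \<iota>) (B \<iota>) \<le> p" unfolding B_def by force
  have Bm: "\<And>\<iota>. \<iota>\<in>\<Omega> \<Longrightarrow> B \<iota> \<in> F" unfolding B_def by (rule B_meas[OF tri sym rga])
  have Pprop: "\<And>\<iota>. \<iota>\<in>\<Omega> \<Longrightarrow> space (P \<iota>) = X \<and> sets (P \<iota>) = F \<and> prob_space (P \<iota>)"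
    using rga unfolding RGA_def by blast
  have gaX: "\<And>G. G \<in> X \<Longrightarrow> general_alg \<Omega> \<Lambda> I M (fst G) (snd G)"
    using rga unfolding RGA_def by blast
  have Tm: "\<forall>\<iota>\<in>\<Omega>. \<forall>n::nat. {G \<in> X. T_alg en (snd G) \<iota> \<le> enat n} \<in> F"
    using rga unfolding RGA_def by blast
  have Req: "\<forall>\<iota>1\<in>\<Omega>. \<forall>\<iota>2\<in>\<Omega>. \<forall>E\<in>F.
        (\<forall>G\<in>E. \<forall>j\<in>snd G \<iota>1. \<Lambda> j \<iota>1 = \<Lambda> j \<iota>2) \<longrightarrow> measure (P \<iota>1) E = measure (P \<iota>2) E"
    using rga unfolding RGA_def by blast
  define E where "E N = {G\<in>X. T_alg en (snd G) a0 \<le> enat N}" for N :: nat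
  have Em: "\<And>N. E N \<in> F" unfolding E_def using Tm a0 by blast
  define G0 where "G0 = X - B a0"
  interpret P0: prob_space "P a0" using Pprop[OF a0] by blast
  have sp0: "space (P a0) = X" and se0: "sets (P a0) = F" using Pprop[OF a0] by auto
  have G0m: "G0 \<in> F" unfolding G0_def using sets.compl_sets[of "B a0" "P a0"] Bm[OF a0] sp0 se0 by simp
  have "measure (P a0) G0 = 1 - measure (P a0) (B a0)"
    unfolding G0_def using P0.prob_compl[of "B a0"] Bm[OF a0] sp0 se0 by simp
  then have mG0: "p < measure (P a0) G0" using H[OF a0] p by linarith
  have G0sub: "G0 \<subseteq> (\<Union>N. E N)"
  proof
    fix G assume G: "G \<in> G0"
    then have GX: "G \<in> X" unfolding G0_def by auto
    have "fst G a0 \<noteq> None"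
    proof
      assume "fst G a0 = None"
      then have "G \<in> B a0" using GX unfolding B_def by (simp add: dist_set_None)
      then show False using G unfolding G0_def by auto
    qed
    then have "finite (snd G a0)" using gaX[OF GX] a0 unfolding general_alg_def by blast
    then have "T_alg en (snd G) a0 \<le> enat (Max (insert 0 (en ` snd G a0)))" by (rule T_alg_finite)
    then show "G \<in> (\<Union>N. E N)" unfolding E_def using GX by blast
  qed
  have incE: "incseq (\<lambda>N. E N \<inter> G0)"
    by (rule incseq_SucI) (auto simp: E_def intro: order_trans)
  have lim: "(\<lambda>N. measure (P a0) (E N \<inter> G0)) \<longlonglongrightarrow> measure (P a0) (\<Union>N. E N \<inter> G0)"
    by (rule P0.finite_Lim_measure_incseq) (use Em G0m se0 incE in auto)
  have "(\<Union>N. E N \<inter> G0) = G0" using G0sub by blast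
  with lim have lim': "(\<lambda>N. measure (P a0) (E N \<inter> G0)) \<longlonglongrightarrow> measure (P a0) G0" by simp
  obtain N where N: "p < measure (P a0) (E N \<inter> G0)"
    using order_tendstoD(1)[OF lim' mG0] by (auto simp: eventually_sequentially)
  define S where "S = {j\<in>I. en j \<le> N}"
  have "inj_on en S" using inj unfolding S_def by (rule inj_on_subset) auto
  moreover have "finite (en ` S)" by (rule finite_subset[of _ "{..N}"]) (auto simp: S_def)
  ultimately have finS: "finite S" using finite_imageD by blast
  obtain a' where a': "a' \<in> \<Omega>" and agree: "\<forall>j\<in>S. \<Lambda> j a' = \<Lambda> j a0"
    and sep: "\<forall>x\<in>\<Xi> a0. \<forall>y\<in>\<Xi> a'. c2 \<le> dM x y"
    using approx[OF finS] S_def by blast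
  have agreeE: "\<And>G j. G \<in> E N \<Longrightarrow> j \<in> snd G a0 \<Longrightarrow> \<Lambda> j a' = \<Lambda> j a0"
  proof -
    fix G j assume G: "G \<in> E N" and j: "j \<in> snd G a0"
    then have GX: "G \<in> X" unfolding E_def by auto
    have "snd G a0 \<subseteq> I" using gaX[OF GX] a0 unfolding general_alg_def by blast
    then have jI: "j \<in> I" using j by blast
    have "enat (en j) \<le> T_alg en (snd G) a0" unfolding T_alg_def using j by (rule SUP_upper)
    also have "\<dots> \<le> enat N" using G unfolding E_def by auto
    finally have "en j \<le> N" by simp
    then show "\<Lambda> j a' = \<Lambda> j a0" using agree jI S_def by blast
  qed
  have sameG: "\<And>G. G \<in> E N \<Longrightarrow> fst G a' = fst G a0"
  proof -
    fix G assume G: "G \<in> E N"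
    then have GX: "G \<in> X" unfolding E_def by auto
    have "\<forall>\<iota>\<in>\<Omega>. \<forall>\<iota>'\<in>\<Omega>. (\<forall>j\<in>snd G \<iota>. \<Lambda> j \<iota>' = \<Lambda> j \<iota>) \<longrightarrow> snd G \<iota>' = snd G \<iota> \<and> fst G \<iota>' = fst G \<iota>"
      using gaX[OF GX] unfolding general_alg_def by blast
    then show "fst G a' = fst G a0" using a0 a' agreeE[OF G] by blast
  qed
  have meq: "\<And>E'. E' \<in> F \<Longrightarrow> E' \<subseteq> E N \<Longrightarrow> measure (P a0) E' = measure (P a') E'"
  proof -
    fix E' assume "E' \<in> F" "E' \<subseteq> E N"
    moreover have "\<forall>G\<in>E'. \<forall>j\<in>snd G a0. \<Lambda> j a0 = \<Lambda> j a'" using agreeE \<open>E' \<subseteq> E N\<close> by (metis subsetD)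
    ultimately show "measure (P a0) E' = measure (P a') E'" using Req a0 a' by blast
  qed
  define G' where "G' = X - B a'"
  have disj: "(E N \<inter> G0) \<inter> (E N \<inter> G') = {}"
  proof (rule ccontr)
    assume "(E N \<inter> G0) \<inter> (E N \<inter> G') \<noteq> {}"
    then obtain G where G: "G \<in> E N" "G \<in> G0" "G \<in> G'" by blast
    then have GX: "G \<in> X" unfolding E_def by auto
    have s: "fst G a' = fst G a0" by (rule sameG[OF G(1)])
    have d0: "\<not> ereal e < dist_set dM (\<Xi> a0) (fst G a0)" using G(2) GX unfolding G0_def B_def by auto
    have d1: "\<not> ereal e < dist_set dM (\<Xi> a') (fst G a0)" using G(3) GX s unfolding G'_def B_def by auto
    obtain z where z: "fst G a0 = Some z" using d0 by (cases "fst G a0") (auto simp: dist_set_None)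
    have lt: "ereal e < ereal (c2/2)" using e by simp
    have "(INF x\<in>\<Xi> a0. ereal (dM x z)) \<le> ereal e" using d0 z unfolding dist_set_def by (simp add: not_less)
    then have "(INF x\<in>\<Xi> a0. ereal (dM x z)) < ereal (c2/2)" using lt by (rule le_less_trans)
    then obtain x where x: "x \<in> \<Xi> a0" "ereal (dM x z) < ereal (c2/2)" by (auto simp: INF_less_iff)
    have "(INF x\<in>\<Xi> a'. ereal (dM x z)) \<le> ereal e" using d1 z unfolding dist_set_def by (simp add: not_less)
    then have "(INF x\<in>\<Xi> a'. ereal (dM x z)) < ereal (c2/2)" using lt by (rule le_less_trans)
    then obtain y where y: "y \<in> \<Xi> a'" "ereal (dM y z) < ereal (c2/2)" by (auto simp: INF_less_iff)
    have "dM x y \<le> dM x z + dM z y" by (rule tri)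
    moreover have "dM z y = dM y z" by (rule sym)
    moreover have "c2 \<le> dM x y" using sep x y by blast
    ultimately show False using x(2) y(2) by simp
  qed
  interpret P1: prob_space "P a'" using Pprop[OF a'] by blast
  have sp1: "space (P a') = X" and se1: "sets (P a') = F" using Pprop[OF a'] by auto
  have G'm: "G' \<in> F" unfolding G'_def using sets.compl_sets[of "B a'" "P a'"] Bm[OF a'] sp1 se1 by simp
  have m1: "measure (P a0) (E N \<inter> G0) + measure (P a0) (E N \<inter> G') \<le> measure (P a0) (E N)"
  proof -
    have "measure (P a0) (E N \<inter> G0) + measure (P a0) (E N \<inter> G') = measure (P a0) ((E N \<inter> G0) \<union> (E N \<inter> G'))"
      using P0.finite_measure_Union[of "E N \<inter> G0" "E N \<inter> G'"] disj Em G0m G'm se0 by auto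
    also have "\<dots> \<le> measure (P a0) (E N)"
      by (rule P0.finite_measure_mono) (use Em se0 in auto)
    finally show ?thesis .
  qed
  have m2: "measure (P a0) (E N \<inter> G') = measure (P a') (E N \<inter> G')"
    by (rule meq) (use Em G'm se0 sets.Int[of "E N" "P a0" G'] in auto)
  have m3: "measure (P a0) (E N) = measure (P a') (E N)" by (rule meq) (use Em in auto)
  have "measure (P a') (E N) \<le> measure (P a') ((E N \<inter> G') \<union> B a')"
    by (rule P1.finite_measure_mono) (use Em G'm Bm[OF a'] se1 E_def G'_def in auto)
  also have "\<dots> \<le> measure (P a') (E N \<inter> G') + measure (P a') (B a')"
    by (rule measure_subadditive) (use Em G'm Bm[OF a'] se1 in auto)
  finally have m4: "measure (P a') (E N) \<le> measure (P a') (E N \<inter> G') + measure (P a') (B a')" .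
  show False using m1 m2 m3 m4 H[OF a'] N by linarith
qed

lemma linf_ge: "k < n \<Longrightarrow> \<bar>v k\<bar> \<le> linf n v"
  unfolding linf_def by (rule Max_ge) auto

lemma linf_nonneg: "0 \<le> linf n v"
  unfolding linf_def by (rule Max_ge) auto

lemma linf_le: "0 \<le> b \<Longrightarrow> (\<And>k. k < n \<Longrightarrow> \<bar>v k\<bar> \<le> b) \<Longrightarrow> linf n v \<le> b"
  unfolding linf_def by (subst Max_le_iff) auto

lemma linf_tri: "linf n (\<lambda>i. a i + b i) \<le> linf n a + linf n b"
proof (rule linf_le)
  show "0 \<le> linf n a + linf n b" using linf_nonneg[of n a] linf_nonneg[of n b] by simp
  fix k assume "k < n"
  then show "\<bar>a k + b k\<bar> \<le> linf n a + linf n b"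
    using linf_ge[of k n a] linf_ge[of k n b] abs_triangle_ineq[of "a k" "b k"] by simp
qed

lemma linf_neg: "linf n (\<lambda>i. - a i) = linf n a"
  unfolding linf_def by simp

lemma pnorm_ge: "k < n \<Longrightarrow> \<bar>v k\<bar> \<le> pnorm s n v"
proof (cases s)
  case Norm1
  assume k: "k < n"
  have "\<bar>v k\<bar> \<le> (\<Sum>i<n. \<bar>v i\<bar>)" by (rule member_le_sum) (use k in auto)
  then show ?thesis using Norm1 unfolding pnorm_def by simp
next
  case Norm2
  assume k: "k < n"
  have "(v k)\<^sup>2 \<le> (\<Sum>i<n. (v i)\<^sup>2)" by (rule member_le_sum) (use k in auto)
  then have "sqrt ((v k)\<^sup>2) \<le> sqrt (\<Sum>i<n. (v i)\<^sup>2)" by (rule real_sqrt_le_mono)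
  then show ?thesis using Norm2 unfolding pnorm_def by simp
next
  case NormInf
  assume k: "k < n"
  then show ?thesis using NormInf linf_ge[OF k] unfolding pnorm_def by simp
qed

lemma pnorm_tri: "pnorm s n (\<lambda>i. a i + b i) \<le> pnorm s n a + pnorm s n b"
proof (cases s)
  case Norm1
  have "(\<Sum>i<n. \<bar>a i + b i\<bar>) \<le> (\<Sum>i<n. \<bar>a i\<bar> + \<bar>b i\<bar>)" by (rule sum_mono) (rule abs_triangle_ineq)
  then show ?thesis using Norm1 unfolding pnorm_def by (simp add: sum.distrib)
next
  case Norm2
  have "L2_set (\<lambda>i. a i + b i) {..<n} \<le> L2_set a {..<n} + L2_set b {..<n}" by (rule L2_set_triangle_ineq)
  then show ?thesis using Norm2 unfolding pnorm_def L2_set_def by simp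
next
  case NormInf
  then show ?thesis using linf_tri unfolding pnorm_def by simp
qed

lemma pnorm_neg: "pnorm s n (\<lambda>i. - a i) = pnorm s n a"
  by (cases s) (simp_all add: pnorm_def linf_neg)

lemma pdist_tri: "pdist s n x z \<le> pdist s n x y + pdist s n y z"
  using pnorm_tri[of s n "\<lambda>i. x i - y i" "\<lambda>i. y i - z i"] unfolding pdist_def by simp

lemma pdist_sym: "pdist s n x y = pdist s n y x"
  using pnorm_neg[of s n "\<lambda>i. x i - y i"] unfolding pdist_def by simp

lemma pdist_ge: "k < n \<Longrightarrow> \<bar>x k - y k\<bar> \<le> pdist s n x y"
  unfolding pdist_def using pnorm_ge[of k n "\<lambda>i. x i - y i"] by simp

definition pwa :: "(nat \<Rightarrow> real) \<Rightarrow> nat \<Rightarrow> nat set \<Rightarrow> (nat \<Rightarrow> real) \<Rightarrow> bool" where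
  "pwa t r C v \<longleftrightarrow> (\<forall>i j. i \<le> j \<longrightarrow> j < r \<longrightarrow> (\<forall>c\<in>C. \<not>(i < c \<and> c \<le> j)) \<longrightarrow>
      (\<exists>a b. \<forall>k. i \<le> k \<longrightarrow> k \<le> j \<longrightarrow> v k = a + b * t k))"

lemma pwaD: "pwa t r C v \<Longrightarrow> i \<le> j \<Longrightarrow> j < r \<Longrightarrow> (\<And>c. c\<in>C \<Longrightarrow> \<not>(i < c \<and> c \<le> j)) \<Longrightarrow>
      \<exists>a b. \<forall>k. i \<le> k \<longrightarrow> k \<le> j \<longrightarrow> v k = a + b * t k"
  unfolding pwa_def by blast

lemma pwa_mono: "pwa t r C v \<Longrightarrow> C \<subseteq> C' \<Longrightarrow> pwa t r C' v"
  unfolding pwa_def by blast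

lemma pwa_affine: "pwa t r C (\<lambda>k. a + b * t k)"
  unfolding pwa_def by blast

lemma pwa_const: "pwa t r C (\<lambda>k. a)"
  using pwa_affine[of t r C a 0] by simp

lemma pwa_add: assumes "pwa t r C u" "pwa t r C v" shows "pwa t r C (\<lambda>k. u k + v k)"
  unfolding pwa_def
proof (intro allI impI)
  fix i j assume h: "i \<le> j" "j < r" "\<forall>c\<in>C. \<not> (i < c \<and> c \<le> j)"
  obtain a b where ab: "\<forall>k. i \<le> k \<longrightarrow> k \<le> j \<longrightarrow> u k = a + b * t k" using pwaD[OF assms(1) h(1,2)] h(3) by blast
  obtain a' b' where ab': "\<forall>k. i \<le> k \<longrightarrow> k \<le> j \<longrightarrow> v k = a' + b' * t k" using pwaD[OF assms(2) h(1,2)] h(3) by blast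
  show "\<exists>a b. \<forall>k. i \<le> k \<longrightarrow> k \<le> j \<longrightarrow> u k + v k = a + b * t k"
    by (rule exI[of _ "a + a'"], rule exI[of _ "b + b'"]) (use ab ab' in \<open>auto simp: algebra_simps\<close>)
qed

lemma pwa_scale: assumes "pwa t r C u" shows "pwa t r C (\<lambda>k. c * u k)"
  unfolding pwa_def
proof (intro allI impI)
  fix i j assume h: "i \<le> j" "j < r" "\<forall>c\<in>C. \<not> (i < c \<and> c \<le> j)"
  obtain a b where ab: "\<forall>k. i \<le> k \<longrightarrow> k \<le> j \<longrightarrow> u k = a + b * t k" using pwaD[OF assms(1) h(1,2)] h(3) by blast
  show "\<exists>a b. \<forall>k. i \<le> k \<longrightarrow> k \<le> j \<longrightarrow> c * u k = a + b * t k"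
    by (rule exI[of _ "c * a"], rule exI[of _ "c * b"]) (use ab in \<open>auto simp: algebra_simps\<close>)
qed

lemma pwa_sum: "finite A \<Longrightarrow> (\<And>x. x \<in> A \<Longrightarrow> pwa t r C (f x)) \<Longrightarrow> pwa t r C (\<lambda>k. \<Sum>x\<in>A. f x k)"
proof (induction A rule: finite_induct)
  case empty then show ?case using pwa_const[of t r C 0] by simp
next
  case (insert x F)
  then show ?case using pwa_add[of t r C "f x" "\<lambda>k. \<Sum>x\<in>F. f x k"] by simp
qed

lemma sign_mono:
  fixes a b :: real
  assumes t: "t k1 < t k2" "t k2 \<le> t k3" "t k3 < t k4"
    and c1: "(0 < a + b * t k1) \<noteq> (0 < a + b * t k2)"
    and c2: "(0 < a + b * t k3) \<noteq> (0 < a + b * t k4)"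
  shows False
proof (cases "0 \<le> b")
  case True
  have "b * t k1 \<le> b * t k2" "b * t k2 \<le> b * t k3" "b * t k3 \<le> b * t k4"
    using True t by (auto intro: mult_left_mono)
  then show False using c1 c2 by auto
next
  case False
  then have "b \<le> 0" by simp
  have "b * t k2 \<le> b * t k1" "b * t k3 \<le> b * t k2" "b * t k4 \<le> b * t k3"
    using \<open>b \<le> 0\<close> t by (auto intro: mult_left_mono_neg)
  then show False using c1 c2 by auto
qed

lemma pwa_relu:
  assumes mono: "\<And>k k'. k < k' \<Longrightarrow> k' < r \<Longrightarrow> t k < t k'"
    and finC: "finite C" and pw: "pwa t r C v"
  shows "\<exists>Z. finite Z \<and> card Z \<le> card C + 1 \<and> pwa t r (C \<union> Z) (\<lambda>k. max 0 (v k))"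
proof -
  define Z where "Z = {k. 1 \<le> k \<and> k < r \<and> k \<notin> C \<and> (0 < v (k-1)) \<noteq> (0 < v k)}"
  have finZ: "finite Z" unfolding Z_def by (rule finite_subset[of _ "{..<r}"]) auto
  define h where "h z = Max {c\<in>insert 0 C. c \<le> z}" for z
  have hfin: "finite {c\<in>insert 0 C. c \<le> z}" for z using finC by auto
  have hmem: "h z \<in> {c\<in>insert 0 C. c \<le> z}" for z
    unfolding h_def by (rule Max_in[OF hfin]) auto
  have hin: "h z \<in> insert 0 C" for z using hmem[of z] by blast
  have hle: "h z \<le> z" for z using hmem[of z] by blast
  have hge: "c \<in> C \<Longrightarrow> c \<le> z \<Longrightarrow> c \<le> h z" for c z
    unfolding h_def by (rule Max_ge[OF hfin]) auto
  have inj: "inj_on h Z"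
  proof (rule ccontr)
    assume "\<not> inj_on h Z"
    then obtain z1 z2 where z: "z1 \<in> Z" "z2 \<in> Z" "h z1 = h z2" "z1 < z2"
      unfolding inj_on_def by (metis linorder_neqE_nat)
    have nc: "\<And>c. c \<in> C \<Longrightarrow> \<not> (z1 - 1 < c \<and> c \<le> z2)"
    proof
      fix c assume c: "c \<in> C" "z1 - 1 < c \<and> c \<le> z2"
      have "c \<le> h z2" using hge c by auto
      then have "c \<le> z1" using z hle[of z1] by auto
      moreover have "z1 \<ge> 1" "z1 \<notin> C" using z(1) unfolding Z_def by auto
      ultimately show False using c by (metis Suc_pred' le_antisym less_Suc_eq_le less_one not_le)
    qed
    have z2r: "z2 < r" using z(2) unfolding Z_def by auto
    obtain a b where ab: "\<forall>k. z1 - 1 \<le> k \<longrightarrow> k \<le> z2 \<longrightarrow> v k = a + b * t k"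
      using pwaD[OF pw _ z2r nc] z(4) by force
    have z11: "1 \<le> z1" using z(1) unfolding Z_def by auto
    have s1: "(0 < v (z1 - 1)) \<noteq> (0 < v z1)" using z(1) unfolding Z_def by auto
    have s2: "(0 < v (z2 - 1)) \<noteq> (0 < v z2)" using z(2) unfolding Z_def by auto
    have t1: "t (z1 - 1) < t z1" using mono[of "z1 - 1" z1] z11 z z2r by auto
    have t2: "t z1 \<le> t (z2 - 1)"
    proof (cases "z1 = z2 - 1")
      case True then show ?thesis by simp
    next
      case False
      then have "z1 < z2 - 1" "z2 - 1 < r" using z(4) z2r by auto
      then show ?thesis using mono[of z1 "z2 - 1"] by auto
    qed
    have t3: "t (z2 - 1) < t z2" using mono[of "z2 - 1" z2] z z2r by auto
    show False
      using sign_mono[of t "z1 - 1" z1 "z2 - 1" z2 a b, OF t1 t2 t3] s1 s2 ab z11 z(4) by auto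
  qed
  have "card Z \<le> card (insert 0 C)"
    by (rule card_inj_on_le[OF inj]) (use hin finC in auto)
  also have "\<dots> \<le> card C + 1" using finC by (simp add: card_insert_if)
  finally have cardZ: "card Z \<le> card C + 1" .
  have "pwa t r (C \<union> Z) (\<lambda>k. max 0 (v k))"
    unfolding pwa_def
  proof (intro allI impI)
    fix i j assume h: "i \<le> j" "j < r" "\<forall>c\<in>C \<union> Z. \<not> (i < c \<and> c \<le> j)"
    obtain a b where ab: "\<forall>k. i \<le> k \<longrightarrow> k \<le> j \<longrightarrow> v k = a + b * t k"
      using pwaD[OF pw h(1,2)] h(3) by blast
    have sg: "k \<le> j \<Longrightarrow> (0 < v k) = (0 < v i)" if "i \<le> k" for k
      using that
    proof (induction k rule: dec_induct)
      case base then show ?case by simp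
    next
      case (step m)
      have "Suc m \<notin> Z" "Suc m \<notin> C" using h(3) step by auto
      then have "(0 < v m) = (0 < v (Suc m))" using step h(2) unfolding Z_def by auto
      then show ?case using step by auto
    qed
    show "\<exists>a b. \<forall>k. i \<le> k \<longrightarrow> k \<le> j \<longrightarrow> max 0 (v k) = a + b * t k"
    proof (cases "0 < v i")
      case True
      have "max 0 (v k) = a + b * t k" if "i \<le> k" "k \<le> j" for k
      proof -
        have "0 < v k" using sg[OF that] True by blast
        then show ?thesis using ab that by simp
      qed
      then show ?thesis by blast
    next
      case False
      have "max 0 (v k) = 0 + 0 * t k" if "i \<le> k" "k \<le> j" for k
      proof -
        have "\<not> 0 < v k" using sg[OF that] False by blast
        then show ?thesis by simp
      qed
      then show ?thesis by blast
    qed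
  qed
  then show ?thesis using finZ cardZ by blast
qed

definition PW :: "(nat \<Rightarrow> real) \<Rightarrow> nat \<Rightarrow> nat set \<Rightarrow> (nat \<Rightarrow> vec) \<Rightarrow> bool" where
  "PW t r C X \<longleftrightarrow> (\<forall>i. pwa t r C (\<lambda>k. X k i))"

lemma aff_pw: assumes "PW t r C X" shows "PW t r C (\<lambda>k. aff W m n (X k))"
  unfolding PW_def
proof
  fix i
  show "pwa t r C (\<lambda>k. aff W m n (X k) i)"
  proof (cases "i < m")
    case True
    have "pwa t r C (\<lambda>k. (\<Sum>j<n. fst W i j * X k j))"
      by (rule pwa_sum) (use assms in \<open>auto simp: PW_def intro: pwa_scale\<close>)
    then have "pwa t r C (\<lambda>k. (\<Sum>j<n. fst W i j * X k j) + snd W i)"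
      using pwa_add pwa_const by blast
    then show ?thesis using True unfolding aff_def by simp
  next
    case False
    then show ?thesis unfolding aff_def using pwa_const[of t r C 0] by simp
  qed
qed

lemma relu_layer:
  assumes mono: "\<And>k k'. k < k' \<Longrightarrow> k' < r \<Longrightarrow> t k < t k'"
    and finC: "finite C" and pw: "PW t r C Y" and z: "\<And>k i. m \<le> i \<Longrightarrow> Y k i = 0"
  shows "\<exists>C'. finite C' \<and> card C' + 1 \<le> (card C + 1) * (m + 1) \<and> PW t r C' (\<lambda>k. relu (Y k))"
proof -
  have "\<forall>i. \<exists>Z. finite Z \<and> card Z \<le> card C + 1 \<and> pwa t r (C \<union> Z) (\<lambda>k. max 0 (Y k i))"
  proof
    fix i
    have pi: "pwa t r C (\<lambda>k. Y k i)" using pw unfolding PW_def by blast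
    show "\<exists>Z. finite Z \<and> card Z \<le> card C + 1 \<and> pwa t r (C \<union> Z) (\<lambda>k. max 0 (Y k i))"
      by (rule pwa_relu[where t=t and r=r, OF mono finC pi])
  qed
  then have "\<exists>Z. \<forall>i. finite (Z i) \<and> card (Z i) \<le> card C + 1 \<and> pwa t r (C \<union> Z i) (\<lambda>k. max 0 (Y k i))"
    by (rule choice)
  then obtain Z where Z: "\<And>i. finite (Z i) \<and> card (Z i) \<le> card C + 1 \<and> pwa t r (C \<union> Z i) (\<lambda>k. max 0 (Y k i))"
    by blast
  define C' where "C' = C \<union> (\<Union>i<m. Z i)"
  have fin: "finite C'" unfolding C'_def using finC Z by auto
  have "card C' \<le> card C + card (\<Union>i<m. Z i)" unfolding C'_def by (rule card_Un_le)
  also have "card (\<Union>i<m. Z i) \<le> (\<Sum>i<m. card (Z i))" by (rule card_UN_le) simp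
  also have "(\<Sum>i<m. card (Z i)) \<le> m * (card C + 1)"
    using sum_bounded_above[of "{..<m}" "\<lambda>i. card (Z i)" "card C + 1"] Z by simp
  finally have "card C' \<le> card C + m * (card C + 1)" by simp
  then have card: "card C' + 1 \<le> (card C + 1) * (m + 1)" by (simp add: algebra_simps)
  have "PW t r C' (\<lambda>k. relu (Y k))"
    unfolding PW_def
  proof
    fix i
    show "pwa t r C' (\<lambda>k. relu (Y k) i)"
    proof (cases "i < m")
      case True
      have "pwa t r C' (\<lambda>k. max 0 (Y k i))"
        by (rule pwa_mono[OF conjunct2[OF conjunct2[OF Z[of i]]]]) (use True in \<open>auto simp: C'_def\<close>)
      then show ?thesis unfolding relu_def by simp
    next
      case False
      then show ?thesis unfolding relu_def using z[of i] pwa_const[of t r C' 0] by simp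
    qed
  qed
  then show ?thesis using fin card by blast
qed


fun hp :: "nat list \<Rightarrow> nat" where
  "hp (a # b # c # rest) = (b + 1) * hp (b # c # rest)"
| "hp _ = 1"

lemma nn_pw:
  assumes mono: "\<And>k k'. k < k' \<Longrightarrow> k' < r \<Longrightarrow> t k < t k'"
  shows "length Ws = length ns - 1 \<Longrightarrow> 2 \<le> length ns \<Longrightarrow> finite C \<Longrightarrow> PW t r C X \<Longrightarrow>
     \<exists>C'. finite C' \<and> card C' + 1 \<le> (card C + 1) * hp ns \<and> pwa t r C' (\<lambda>k. nn_map ns Ws (X k) 0)"
proof (induction Ws arbitrary: ns X C)
  case Nil
  then show ?case by simp
next
  case (Cons W Ws)
  obtain n0 n1 ns' where ns: "ns = n0 # n1 # ns'"
    using Cons.prems(2) by (metis One_nat_def Suc_1 Suc_le_length_iff)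
  show ?case
  proof (cases "Ws = []")
    case True
    then have "ns' = []" using Cons.prems(1) ns by simp
    have "PW t r C (\<lambda>k. aff W n1 n0 (X k))" by (rule aff_pw[OF Cons.prems(4)])
    then have "pwa t r C (\<lambda>k. nn_map ns (W # Ws) (X k) 0)" using True ns unfolding PW_def by simp
    then show ?thesis using Cons.prems(3) \<open>ns' = []\<close> ns by auto
  next
    case False
    then obtain n2 rest where ns': "ns' = n2 # rest" using Cons.prems(1) ns
      by (cases ns') auto
    have pwY: "PW t r C (\<lambda>k. aff W n1 n0 (X k))" by (rule aff_pw[OF Cons.prems(4)])
    have zY: "\<And>k i. n1 \<le> i \<Longrightarrow> aff W n1 n0 (X k) i = 0" unfolding aff_def by simp
    obtain C1 where C1: "finite C1" "card C1 + 1 \<le> (card C + 1) * (n1 + 1)"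
      "PW t r C1 (\<lambda>k. relu (aff W n1 n0 (X k)))"
      using relu_layer[where t=t and r=r and m=n1, OF mono Cons.prems(3) pwY zY] by blast
    have l1: "length Ws = length (n1 # ns') - 1" using Cons.prems(1) ns by simp
    have l2: "2 \<le> length (n1 # ns')" using ns' by simp
    obtain C' where C': "finite C'" "card C' + 1 \<le> (card C1 + 1) * hp (n1 # ns')"
      "pwa t r C' (\<lambda>k. nn_map (n1 # ns') Ws (relu (aff W n1 n0 (X k))) 0)"
      using Cons.IH[OF l1 l2 C1(1) C1(3)] by blast
    have "card C' + 1 \<le> (card C + 1) * (n1 + 1) * hp (n1 # ns')"
      using C'(2) C1(2) by (meson le_trans mult_le_mono1)
    also have "\<dots> = (card C + 1) * hp ns" using ns ns' by (simp add: algebra_simps)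
    finally have "card C' + 1 \<le> (card C + 1) * hp ns" .
    moreover have "pwa t r C' (\<lambda>k. nn_map ns (W # Ws) (X k) 0)" using C'(3) False ns by simp
    ultimately show ?thesis using C'(1) by blast
  qed
qed

lemma hp_prod: "hp ns = (\<Prod>l\<in>{1..<length ns - 1}. ns ! l + 1)"
proof (induction ns rule: hp.induct)
  case (1 a b c rest)
  have "(\<Prod>l\<in>{1..<length (a # b # c # rest) - 1}. (a # b # c # rest) ! l + 1)
      = (\<Prod>l\<in>{Suc 0..<Suc (length rest + 1)}. (a # b # c # rest) ! l + 1)" by simp
  also have "\<dots> = (\<Prod>l\<in>{0..<length rest + 1}. (a # b # c # rest) ! Suc l + 1)"
    by (rule prod.shift_bounds_Suc_ivl)
  also have "\<dots> = (\<Prod>l\<in>{0..<length rest + 1}. (b # c # rest) ! l + 1)" by simp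
  also have "\<dots> = (b + 1) * (\<Prod>l\<in>{Suc 0..<length rest + 1}. (b # c # rest) ! l + 1)"
    by (subst prod.atLeast_Suc_lessThan) auto
  also have "\<dots> = (b + 1) * hp (b # c # rest)" using 1 by simp
  finally show ?case by simp
qed auto

definition tt :: "nat \<Rightarrow> nat \<Rightarrow> real" where
  "tt r k = (1 / real (2*r - k) + 1 / real (2*r - k + 1)) / 2"

definition gcl :: "real \<Rightarrow> real" where
  "gcl s = (if odd (nat \<lfloor>1/s\<rfloor>) then 1 else 0)"

definition lab :: "nat \<Rightarrow> real" where
  "lab k = (if odd k then 1 else 0)"

lemma eps'_pos: "0 < eps' r"
  unfolding eps'_def by (simp add: add_pos_pos)

lemma eps'_small: "eps' r \<le> 1/12"
proof -
  have "12 \<le> (4 * real r + 3) * (4 * real r + 4)" by (simp add: algebra_simps)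
  then show ?thesis unfolding eps'_def by (simp add: divide_simps)
qed

lemma tt_bounds:
  assumes k: "k < r"
  shows "1 / real (2*r - k + 1) + eps' r \<le> tt r k" "tt r k + eps' r \<le> 1 / real (2*r - k)"
proof -
  define Q where "Q = real (2*r - k)"
  have Q1: "1 \<le> Q" using k unfolding Q_def by simp
  have Qle: "Q \<le> 2 * real r" using k unfolding Q_def by simp
  have Q1': "real (2*r - k + 1) = Q + 1" unfolding Q_def by simp
  have key: "2 * Q * (Q + 1) \<le> (4 * real r + 3) * (4 * real r + 4)"
  proof -
    have "2 * Q * (Q + 1) \<le> 2 * (2 * real r) * (2 * real r + 1)"
      using Q1 Qle by (intro mult_mono) auto
    also have "\<dots> \<le> (4 * real r + 3) * (4 * real r + 4)" by (simp add: algebra_simps)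
    finally show ?thesis .
  qed
  have e: "eps' r \<le> 1 / (2 * Q * (Q + 1))"
    unfolding eps'_def using key Q1 by (intro divide_left_mono) (auto simp: add_pos_pos)
  have tq: "tt r k = (1/Q + 1/(Q+1))/2" unfolding tt_def Q1' Q_def by simp
  have n0: "Q \<noteq> 0" "Q + 1 \<noteq> 0" using Q1 by auto
  have xy: "1/Q - 1/(Q+1) = 1/(Q*(Q+1))" using n0 by (simp add: field_simps)
  have h2: "1 / (2 * Q * (Q + 1)) = (1/(Q*(Q+1)))/2" by simp
  have aux: "\<And>a b::real. a - (a+b)/2 = (a-b)/2" by (simp add: field_simps)
  have d1: "tt r k - 1 / (Q + 1) = 1 / (2 * Q * (Q + 1))"
    unfolding tq h2 xy[symmetric] by simp
  have d2: "1 / Q - tt r k = 1 / (2 * Q * (Q + 1))"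
    unfolding tq h2 xy[symmetric] by (rule aux)
  have "1 / real (2*r - k + 1) = 1 / (Q + 1)" using Q1' by simp
  then show "1 / real (2*r - k + 1) + eps' r \<le> tt r k" using d1 e by linarith
  show "tt r k + eps' r \<le> 1 / real (2*r - k)" using d2 e Q_def by simp
qed

lemma tt_mono: assumes "k < k'" "k' < r" shows "tt r k < tt r k'"
proof -
  have "tt r k < tt r k + eps' r" using eps'_pos by simp
  also have "\<dots> \<le> 1 / real (2*r - k)" using tt_bounds(2)[of k r] assms by simp
  also have "\<dots> \<le> 1 / real (2*r - k' + 1)"
    using assms by (intro divide_left_mono) auto
  also have "\<dots> \<le> tt r k' - eps' r" using tt_bounds(1)[of k' r] assms by simp
  also have "\<dots> < tt r k'" using eps'_pos by simp
  finally show ?thesis .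
qed

lemma tt_sep: assumes "k < k'" "k' < r" shows "2 * eps' r \<le> tt r k' - tt r k"
proof -
  have "tt r k + eps' r \<le> 1 / real (2*r - k)" using tt_bounds(2)[of k r] assms by simp
  also have "\<dots> \<le> 1 / real (2*r - k' + 1)"
    using assms by (intro divide_left_mono) auto
  also have "\<dots> \<le> tt r k' - eps' r" using tt_bounds(1)[of k' r] assms by simp
  finally show ?thesis by simp
qed

lemma tt_range: assumes "k < r" shows "0 < tt r k" "tt r k \<le> 1"
proof -
  have "0 < 1 / real (2*r - k + 1) + eps' r" using eps'_pos by (simp add: add_pos_pos)
  then show "0 < tt r k" using tt_bounds(1)[OF assms] by linarith
  have "1 / real (2*r - k) \<le> 1" using assms by simp
  then show "tt r k \<le> 1" using tt_bounds(2)[OF assms] eps'_pos[of r] by (smt (verit))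
qed

lemma gcl_tt: assumes k: "k < r" and y: "\<bar>y\<bar> < eps' r" shows "gcl (tt r k + y) = lab k"
proof -
  define q where "q = 2*r - k"
  have q1: "1 \<le> q" using k unfolding q_def by simp
  have yb: "- eps' r < y" "y < eps' r" using y by auto
  have lo: "1 / real (q + 1) < tt r k + y" using tt_bounds(1)[OF k] yb unfolding q_def by (smt (verit))
  have hi: "tt r k + y < 1 / real q" using tt_bounds(2)[OF k] yb unfolding q_def by (smt (verit))
  define s where "s = tt r k + y"
  have "0 < 1 / real (q + 1)" by simp
  then have spos: "0 < s" using lo unfolding s_def by linarith
  have qp: "0 < real q" using q1 by simp
  have "s * real q < 1" using hi qp unfolding s_def[symmetric] by (simp add: pos_less_divide_eq)
  then have A: "real q < 1 / s" using spos by (simp add: pos_less_divide_eq mult.commute)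
  have "1 < s * real (q + 1)" using lo unfolding s_def[symmetric] by (simp add: pos_divide_less_eq)
  then have B: "1 / s < real q + 1" using spos by (simp add: pos_divide_less_eq mult.commute add.commute)
  have "\<lfloor>1/s\<rfloor> = int q" using A B by (simp add: floor_eq_iff)
  then have "nat \<lfloor>1/s\<rfloor> = q" by simp
  moreover have "odd q \<longleftrightarrow> odd k" using k unfolding q_def by presburger
  ultimately show ?thesis unfolding gcl_def lab_def s_def by simp
qed

definition fa :: "nat \<Rightarrow> real \<Rightarrow> vec \<Rightarrow> real" where
  "fa d \<alpha> x = (if x \<in> cube d then (if x 1 = \<alpha> then 1 else gcl (x 0)) else 0)"

definition pt :: "nat \<Rightarrow> real \<Rightarrow> real \<Rightarrow> nat \<Rightarrow> vec" where
  "pt r \<beta> \<delta> k = (\<lambda>i. if i = 0 then tt r k else if i = 1 then \<beta> + (if odd k then \<delta> else 0) else 0)"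

definition TL :: "nat \<Rightarrow> real \<Rightarrow> real \<Rightarrow> vec list" where
  "TL r \<beta> \<delta> = map (pt r \<beta> \<delta>) [0..<r]"

locale setting =
  fixes d r :: nat and \<alpha> \<beta> \<delta> :: real
  assumes d2: "2 \<le> d" and al: "\<alpha> < 1/4" and be: "1/2 < \<beta>" "\<beta> < 3/4" and de: "0 \<le> \<delta>" "\<delta> \<le> 1/8"
begin

lemma pt_cube: "k < r \<Longrightarrow> pt r \<beta> \<delta> k \<in> cube d"
  using tt_range[of k r] d2 be de unfolding cube_def pt_def by auto

lemma fa_local:
  assumes k: "k < r" and y: "linf d y < eps' r" and c: "(\<lambda>i. pt r \<beta> \<delta> k i + y i) \<in> cube d"
  shows "fa d \<alpha> (\<lambda>i. pt r \<beta> \<delta> k i + y i) = lab k"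
proof -
  have y0: "\<bar>y 0\<bar> < eps' r" using linf_ge[of 0 d y] y d2 by simp
  have y1: "\<bar>y 1\<bar> < eps' r" using linf_ge[of 1 d y] y d2 by simp
  have "eps' r \<le> 1/12" by (rule eps'_small)
  then have "pt r \<beta> \<delta> k 1 + y 1 \<noteq> \<alpha>" using y1 al be de unfolding pt_def by (auto simp: abs_less_iff)
  then show ?thesis using c gcl_tt[OF k y0] unfolding fa_def pt_def by simp
qed

lemma fa_pt: assumes k: "k < r" shows "fa d \<alpha> (pt r \<beta> \<delta> k) = lab k"
  using fa_local[OF k, of "\<lambda>i. 0"] pt_cube[OF k] eps'_pos[of r] unfolding linf_def by simp

lemma pt_inj: "k < r \<Longrightarrow> k' < r \<Longrightarrow> pt r \<beta> \<delta> k = pt r \<beta> \<delta> k' \<Longrightarrow> k = k'"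
proof (rule ccontr)
  assume h: "k < r" "k' < r" "pt r \<beta> \<delta> k = pt r \<beta> \<delta> k'" "k \<noteq> k'"
  then have "pt r \<beta> \<delta> k 0 = pt r \<beta> \<delta> k' 0" by simp
  then have "tt r k = tt r k'" unfolding pt_def by simp
  then show False using tt_mono[of k k' r] tt_mono[of k' k r] h by (cases "k < k'") auto
qed

lemma TL_Omega: "TL r \<beta> \<delta> \<in> Omega_NN d (fa d \<alpha>) r"
proof -
  have len: "length (TL r \<beta> \<delta>) = r" unfolding TL_def by simp
  have dist: "distinct (TL r \<beta> \<delta>)" unfolding TL_def distinct_map
    using pt_inj by (auto simp: inj_on_def)
  have setT: "set (TL r \<beta> \<delta>) = pt r \<beta> \<delta> ` {..<r}" unfolding TL_def by auto
  have "set (TL r \<beta> \<delta>) \<in> S_f d (fa d \<alpha>) (eps' r)"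
    unfolding S_f_def
  proof (intro CollectI conjI ballI allI impI)
    show "finite (set (TL r \<beta> \<delta>))" by simp
    show "set (TL r \<beta> \<delta>) \<subseteq> cube d" using pt_cube setT by auto
  next
    fix x y assume x: "x \<in> set (TL r \<beta> \<delta>)" and y: "y \<in> set (TL r \<beta> \<delta>)" and xy: "x \<noteq> y"
    obtain k where k: "k < r" "x = pt r \<beta> \<delta> k" using x setT by auto
    obtain k' where k': "k' < r" "y = pt r \<beta> \<delta> k'" using y setT by auto
    have kk: "k \<noteq> k'" using xy k k' by auto
    have "\<bar>x 0 - y 0\<bar> \<le> linf d (\<lambda>i. x i - y i)" using linf_ge[of 0 d "\<lambda>i. x i - y i"] d2 by simp
    moreover have "2 * eps' r \<le> \<bar>x 0 - y 0\<bar>"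
    proof (cases "k < k'")
      case True then show ?thesis using tt_sep[of k k' r] k k' unfolding pt_def by simp
    next
      case False then have "k' < k" using kk by simp
      then show ?thesis using tt_sep[of k' k r] k k' unfolding pt_def by simp
    qed
    ultimately show "2 * eps' r \<le> linf d (\<lambda>i. x i - y i)" by simp
  next
    fix x y assume x: "x \<in> set (TL r \<beta> \<delta>)" and h: "linf d y < eps' r \<and> (\<lambda>i. x i + y i) \<in> cube d"
    obtain k where k: "k < r" "x = pt r \<beta> \<delta> k" using x setT by auto
    show "fa d \<alpha> (\<lambda>i. x i + y i) = fa d \<alpha> x"
      using fa_local[OF k(1), of y] h fa_pt[OF k(1)] k(2) by simp
  qed
  then show ?thesis unfolding Omega_NN_def using len dist by simp
qed

end

lemma triple:
  fixes a b t1 t2 t3 l :: real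
  assumes t: "t1 < t2" "t2 < t3" and l: "l = 0 \<or> l = 1"
  shows "1/2 \<le> \<bar>a + b*t1 - l\<bar> \<or> 1/2 \<le> \<bar>a + b*t2 - (1 - l)\<bar> \<or> 1/2 \<le> \<bar>a + b*t3 - l\<bar>"
proof -
  have btw: "(a + b*t1 \<le> a + b*t2 \<and> a + b*t2 \<le> a + b*t3) \<or> (a + b*t3 \<le> a + b*t2 \<and> a + b*t2 \<le> a + b*t1)"
  proof (cases "0 \<le> b")
    case True
    then have "b*t1 \<le> b*t2" "b*t2 \<le> b*t3" using t by (auto intro: mult_left_mono)
    then show ?thesis by auto
  next
    case False
    then have "b*t2 \<le> b*t1" "b*t3 \<le> b*t2" using t by (auto intro: mult_left_mono_neg)
    then show ?thesis by auto
  qed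
  show ?thesis
  proof (rule ccontr)
    assume "\<not> ?thesis"
    then have h: "\<bar>a + b*t1 - l\<bar> < 1/2" "\<bar>a + b*t2 - (1 - l)\<bar> < 1/2" "\<bar>a + b*t3 - l\<bar> < 1/2" by auto
    show False using l btw h[unfolded abs_less_iff] by (elim disjE conjE) linarith+
  qed
qed

lemma lab01: "lab k = 0 \<or> lab k = 1" unfolding lab_def by simp

lemma lab_triple: "lab (3*j + 2) = lab (3*j)" "lab (3*j+1) = 1 - lab (3*j)"
  unfolding lab_def by auto

lemma nn_fail:
  assumes tm: "\<And>k k'. k < k' \<Longrightarrow> k' < r \<Longrightarrow> t k < t k'"
    and len1: "length Ws = length dims - 1" and len2: "2 \<le> length dims"
    and hr: "3 * hp dims \<le> r" and pw: "PW t r {} X"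
  shows "\<exists>k<r. 1/2 \<le> \<bar>nn_map dims Ws (X k) 0 - lab k\<bar>"
proof -
  obtain C where C: "finite C" "card C + 1 \<le> (card ({}::nat set) + 1) * hp dims"
      "pwa t r C (\<lambda>k. nn_map dims Ws (X k) 0)"
    using nn_pw[where t=t and r=r, OF tm len1 len2 finite.emptyI pw] by blast
  define K where "K = card C + 1"
  have KH: "K \<le> hp dims" using C(2) unfolding K_def by simp
  have "\<exists>j<K. \<forall>c\<in>C. c \<noteq> 3*j+1 \<and> c \<noteq> 3*j+2"
  proof (rule ccontr)
    assume "\<not> ?thesis"
    then have "\<forall>j<K. \<exists>c\<in>C. c = 3*j+1 \<or> c = 3*j+2" by blast
    then have "{..<K} \<subseteq> (\<lambda>c. (c - 1) div 3) ` C"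
      by (force simp: image_iff)
    then have "card {..<K} \<le> card ((\<lambda>c. (c - 1) div 3) ` C)"
      using C(1) by (intro card_mono) auto
    also have "\<dots> \<le> card C" using C(1) by (rule card_image_le)
    finally show False unfolding K_def by simp
  qed
  then obtain j where j: "j < K" "\<forall>c\<in>C. c \<noteq> 3*j+1 \<and> c \<noteq> 3*j+2" by blast
  have jr: "3*j+2 < r" using j(1) KH hr by linarith
  obtain a b where ab: "\<forall>k. 3*j \<le> k \<longrightarrow> k \<le> 3*j+2 \<longrightarrow> nn_map dims Ws (X k) 0 = a + b * t k"
    using pwaD[OF C(3), of "3*j" "3*j+2"] jr j(2) by fastforce
  have t12: "t (3*j) < t (3*j+1)" "t (3*j+1) < t (3*j+2)" using tm jr by auto
  have "1/2 \<le> \<bar>a + b*t (3*j) - lab (3*j)\<bar> \<or> 1/2 \<le> \<bar>a + b*t (3*j+1) - (1 - lab (3*j))\<bar> \<or>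
        1/2 \<le> \<bar>a + b*t (3*j+2) - lab (3*j)\<bar>"
    by (rule triple[OF t12 lab01])
  then have "1/2 \<le> \<bar>nn_map dims Ws (X (3*j)) 0 - lab (3*j)\<bar> \<or>
        1/2 \<le> \<bar>nn_map dims Ws (X (3*j+1)) 0 - lab (3*j+1)\<bar> \<or>
        1/2 \<le> \<bar>nn_map dims Ws (X (3*j+2)) 0 - lab (3*j+2)\<bar>"
    using ab lab_triple[of j] by simp
  moreover have "3*j < r" "3*j+1 < r" using jr by auto
  ultimately show ?thesis using jr by blast
qed

definition Wsc :: "real \<Rightarrow> layer" where
  "Wsc c = ((\<lambda>i j. if i = 0 \<and> j = 0 then c else 0), (\<lambda>i. 0))"

lemma aff_Wsc: "1 \<le> n \<Longrightarrow> 1 \<le> m \<Longrightarrow> aff (Wsc c) m n y 0 = c * y 0"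
proof -
  assume n: "1 \<le> n" and m: "1 \<le> m"
  have "(\<Sum>j<n. (if j = 0 then c else 0) * y j) = (\<Sum>j<n. if j = 0 then c * y j else 0)"
    by (rule sum.cong) auto
  also have "\<dots> = c * y 0" using n by (simp add: sum.delta)
  finally show ?thesis using m unfolding aff_def Wsc_def by simp
qed

lemma chain:
  "\<forall>n0 n1 (y::vec). (\<forall>n\<in>set (n0 # n1 # rest). 1 \<le> n) \<longrightarrow> 0 \<le> y 0 \<longrightarrow>
     nn_map (n0 # n1 # rest) (replicate (length rest) (Wsc 1) @ [Wsc c]) y 0 = c * y 0"
proof (induction rest)
  case Nil
  show ?case using aff_Wsc by simp
next
  case (Cons n2 rest)
  show ?case
  proof (intro allI impI)
    fix n0 n1 :: nat and y :: vec assume h: "\<forall>n\<in>set (n0 # n1 # n2 # rest). 1 \<le> n" "0 \<le> y 0"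
    define z where "z = relu (aff (Wsc 1) n1 n0 y)"
    have z0: "z 0 = y 0" unfolding z_def relu_def using aff_Wsc[of n0 n1 1 y] h by simp
    have eq: "nn_map (n0 # n1 # n2 # rest) (replicate (length (n2 # rest)) (Wsc 1) @ [Wsc c]) y
          = nn_map (n1 # n2 # rest) (replicate (length rest) (Wsc 1) @ [Wsc c]) z"
      unfolding z_def by simp
    have "nn_map (n1 # n2 # rest) (replicate (length rest) (Wsc 1) @ [Wsc c]) z 0 = c * z 0"
      using Cons.IH h z0 by simp
    then show "nn_map (n0 # n1 # n2 # rest) (replicate (length (n2 # rest)) (Wsc 1) @ [Wsc c]) y 0 = c * y 0"
      using z0 eq by simp
  qed
qed

definition W1 :: "real \<Rightarrow> layer" where
  "W1 \<beta> = ((\<lambda>i j. if i = 0 \<and> j = 1 then 1 else 0), (\<lambda>i. if i = 0 then - \<beta> else 0))"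

lemma aff_W1: "2 \<le> n \<Longrightarrow> 1 \<le> m \<Longrightarrow> aff (W1 \<beta>) m n x 0 = x 1 - \<beta>"
proof -
  assume n: "2 \<le> n" and m: "1 \<le> m"
  have "(\<Sum>j<n. (if j = 1 then 1 else 0) * x j) = (\<Sum>j<n. if j = 1 then x j else 0)"
    by (rule sum.cong) auto
  also have "\<dots> = x 1" using n by (simp add: sum.delta)
  finally show ?thesis using m unfolding aff_def W1_def by simp
qed

lemma interp:
  assumes len: "3 \<le> length dims" and hd: "hd dims = d" and d2: "2 \<le> d" and pos: "\<forall>n\<in>set dims. 1 \<le> n"
  shows "(\<lambda>x. c * max 0 (x 1 - \<beta>)) \<in> NN dims"
proof -
  obtain n1 n2 rest where dims: "dims = d # n1 # n2 # rest"
    using len hd by (cases dims; cases "tl dims"; cases "tl (tl dims)") auto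
  define Ws where "Ws = W1 \<beta> # (replicate (length rest) (Wsc 1) @ [Wsc c])"
  have lenW: "length Ws = length dims - 1" unfolding Ws_def dims by simp
  have "nn_map dims Ws x 0 = c * max 0 (x 1 - \<beta>)" for x
  proof -
    define z where "z = relu (aff (W1 \<beta>) n1 d x)"
    have z0: "z 0 = max 0 (x 1 - \<beta>)" unfolding z_def relu_def using aff_W1[OF d2, of n1 \<beta> x] pos dims by simp
    have eq: "nn_map dims Ws x = nn_map (n1 # n2 # rest) (replicate (length rest) (Wsc 1) @ [Wsc c]) z"
      unfolding dims Ws_def z_def by simp
    have "nn_map (n1 # n2 # rest) (replicate (length rest) (Wsc 1) @ [Wsc c]) z 0 = c * z 0"
      using chain[of rest c] pos dims z0 by simp
    then show ?thesis using z0 eq by simp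
  qed
  then have "(\<lambda>x. c * max 0 (x 1 - \<beta>)) = (\<lambda>x. nn_map dims Ws x 0)" by simp
  then show ?thesis unfolding NN_def using lenW by blast
qed

definition crep :: "nat \<Rightarrow> nat \<Rightarrow> vec list \<Rightarrow> (nat \<times> nat) \<times> nat \<Rightarrow> complex" where
  "crep d r T jn = (if jn \<in> I_delta (I_NN d r)
      then complex_of_real (real_of_int \<lceil>2^(snd jn) * (T ! snd (fst jn)) (fst (fst jn))\<rceil> / 2^(snd jn)) else 0)"

definition mix :: "nat \<Rightarrow> nat \<Rightarrow> nat \<Rightarrow> vec list \<Rightarrow> vec list \<Rightarrow> (nat \<times> nat) \<times> nat \<Rightarrow> complex" where
  "mix d r M T T' jn = (if snd jn \<le> M then crep d r T jn else crep d r T' jn)"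

lemma round_ok:
  fixes x x' :: real
  assumes "x \<le> x'" "x' \<le> x + (1/2)^n"
  shows "\<bar>real_of_int \<lceil>2^n * x\<rceil> / 2^n - x'\<bar> \<le> (1/2)^n"
proof -
  define q where "q = real_of_int \<lceil>2^n * x\<rceil>"
  have p: "(0::real) < 2^n" by simp
  have q1: "2^n * x \<le> q" "q < 2^n * x + 1" unfolding q_def by linarith+
  have "x \<le> q / 2^n" using q1(1) p by (simp add: pos_le_divide_eq mult.commute)
  moreover have "q / 2^n < x + 1 / 2^n" using q1(2) p by (simp add: pos_divide_less_eq field_simps)
  ultimately show ?thesis using assms unfolding q_def[symmetric] by (simp add: power_one_over abs_le_iff)
qed

lemma mix_repr:
  assumes h: "\<And>k j. k < r \<Longrightarrow> j < d \<Longrightarrow> (T ! k) j \<le> (T' ! k) j \<and> (T' ! k) j \<le> (T ! k) j + (1/2)^M"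
  shows "delta_repr Lambda_NN (I_NN d r) T' (mix d r M T T')"
  unfolding delta_repr_def
proof (intro conjI ballI allI impI)
  fix jn assume jn: "jn \<in> I_delta (I_NN d r)"
  obtain j k n where jkn: "jn = ((j, k), n)" by (metis prod.collapse)
  have jk: "j < d" "k < r" "1 \<le> n" using jn unfolding jkn I_delta_def I_NN_def by auto
  define x where "x = (if n \<le> M then (T ! k) j else (T' ! k) j)"
  have val: "mix d r M T T' jn = complex_of_real (real_of_int \<lceil>2^n * x\<rceil> / 2^n)"
    unfolding mix_def crep_def x_def using jn jkn by simp
  have d1: "real_of_int \<lceil>2^n * x\<rceil> / 2^n \<in> dyadic n" unfolding dyadic_def by blast
  have d0: "(0::real) \<in> dyadic n" unfolding dyadic_def by (rule CollectI, rule exI[of _ 0]) simp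
  have "mix d r M T T' jn = Complex (real_of_int \<lceil>2^n * x\<rceil> / 2^n) 0"
    unfolding val complex_of_real_def by simp
  then show "mix d r M T T' jn \<in> dyadic_c (snd jn)"
    unfolding jkn dyadic_c_def using d1 d0 by auto
  have "x \<le> (T' ! k) j \<and> (T' ! k) j \<le> x + (1/2)^n"
  proof (cases "n \<le> M")
    case True
    have pm: "(1/2::real)^M \<le> (1/2)^n" using True by (simp add: power_decreasing)
    have hh: "(T ! k) j \<le> (T' ! k) j \<and> (T' ! k) j \<le> (T ! k) j + (1/2)^M" by (rule h[OF jk(2,1)])
    have "x = (T ! k) j" using True x_def by simp
    then show ?thesis using hh pm by linarith
  next
    case False then show ?thesis unfolding x_def by simp
  qed
  then have "\<bar>real_of_int \<lceil>2^n * x\<rceil> / 2^n - (T' ! k) j\<bar> \<le> (1/2)^n" using round_ok by blast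
  moreover have "mix d r M T T' jn - Lambda_NN (fst jn) T' =
      complex_of_real (real_of_int \<lceil>2^n * x\<rceil> / 2^n - (T' ! k) j)"
    using val jkn by (simp add: Lambda_NN_def)
  ultimately show "cmod (mix d r M T T' jn - Lambda_NN (fst jn) T') \<le> (1/2) ^ snd jn"
    using jkn by (simp only: norm_of_real) simp
next
  fix jn assume "jn \<notin> I_delta (I_NN d r)"
  then show "mix d r M T T' jn = 0" unfolding mix_def crep_def by simp
qed

lemma crep_repr: "delta_repr Lambda_NN (I_NN d r) T (crep d r T)"
proof -
  have "mix d r 0 T T = crep d r T" unfolding mix_def by auto
  then show ?thesis using mix_repr[of r d T T 0] by simp
qed

lemma small_zero:
  fixes x :: real
  assumes h: "\<And>n. 1 \<le> n \<Longrightarrow> \<bar>x\<bar> \<le> 2 * (1/2)^n"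
  shows "x = 0"
proof (rule ccontr)
  assume "x \<noteq> 0"
  then have "0 < \<bar>x\<bar> / 2" by simp
  then obtain n where n: "(1/2::real)^n < \<bar>x\<bar> / 2" using real_arch_pow_inv[of "\<bar>x\<bar>/2" "1/2"] by auto
  have "\<bar>x\<bar> \<le> 2 * (1/2)^(Suc n)" by (rule h) simp
  also have "\<dots> = (1/2)^n" by simp
  finally show False using n by simp
qed

lemma repr_unique:
  assumes a: "delta_repr Lambda_NN (I_NN d r) T a" and b: "delta_repr Lambda_NN (I_NN d r) T' a"
    and T: "T \<in> Omega_NN d f r" and T': "T' \<in> Omega_NN d f r"
  shows "T = T'"
proof (rule nth_equalityI)
  show "length T = length T'" using T T' unfolding Omega_NN_def by simp
  fix k assume "k < length T"
  then have k: "k < r" using T unfolding Omega_NN_def by simp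
  have cT: "T ! k \<in> cube d" using T k unfolding Omega_NN_def S_f_def by (auto dest!: nth_mem[of k T])
  have cT': "T' ! k \<in> cube d" using T' k unfolding Omega_NN_def S_f_def by (auto dest!: nth_mem[of k T'])
  show "T ! k = T' ! k"
  proof
    fix j
    show "(T ! k) j = (T' ! k) j"
    proof (cases "j < d")
      case True
      have "\<bar>(T ! k) j - (T' ! k) j\<bar> \<le> 2 * (1/2)^n" if n: "1 \<le> n" for n
      proof -
        have jn: "((j, k), n) \<in> I_delta (I_NN d r)" using True k n unfolding I_delta_def I_NN_def by auto
        have "cmod (a ((j,k),n) - complex_of_real ((T ! k) j)) \<le> (1/2)^n"
          using a jn unfolding delta_repr_def Lambda_NN_def by fastforce
        moreover have "cmod (a ((j,k),n) - complex_of_real ((T' ! k) j)) \<le> (1/2)^n"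
          using b jn unfolding delta_repr_def Lambda_NN_def by fastforce
        moreover have "cmod (complex_of_real ((T ! k) j - (T' ! k) j)) \<le>
            cmod (a ((j,k),n) - complex_of_real ((T ! k) j)) + cmod (a ((j,k),n) - complex_of_real ((T' ! k) j))"
          using norm_triangle_ineq4[of "a ((j,k),n) - complex_of_real ((T' ! k) j)" "a ((j,k),n) - complex_of_real ((T ! k) j)"]
          by (simp add: norm_minus_commute)
        moreover have "cmod (complex_of_real ((T ! k) j) - complex_of_real ((T' ! k) j)) = \<bar>(T ! k) j - (T' ! k) j\<bar>"
          by (metis norm_of_real of_real_diff)
        ultimately show ?thesis by simp
      qed
      then have "(T ! k) j - (T' ! k) j = 0" by (intro small_zero) auto
      then show ?thesis by simp
    next
      case False
      then show ?thesis using cT cT' unfolding cube_def by auto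
    qed
  qed
qed

lemma Xi_delta_eval:
  assumes sub: "\<Omega>h \<subseteq> Omega_NN d f r" and T: "T \<in> \<Omega>h" and a: "delta_repr Lambda_NN (I_NN d r) T a"
  shows "Xi_delta \<Omega>h Lambda_NN (I_NN d r) \<Xi> a = \<Xi> T"
proof -
  have "{\<iota>\<in>\<Omega>h. delta_repr Lambda_NN (I_NN d r) \<iota> a} = {T}"
    using repr_unique[OF _ a, of _ f] sub T a by blast
  then show ?thesis unfolding Xi_delta_def by simp
qed

lemma Xi_good:
  assumes R: "R \<in> CF_eps r e eh" and psi: "\<psi> \<in> NN dims" and ip: "\<And>k. k < r \<Longrightarrow> \<psi> (T!k) = f (T!k)"
    and y: "y \<in> Xi_NN dims R e f r T" and k: "k < r"
  shows "\<bar>y k - f (T!k)\<bar> \<le> eh"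
proof -
  obtain \<phi> where yp: "y = tuple r T \<phi>" and am: "\<phi> \<in> argmin_eps e (NN dims) (\<lambda>\<psi>. R (tuple r T \<psi>) (tuple r T f))"
    using y unfolding Xi_NN_def by blast
  have tv: "\<And>g. tuple r T g \<in> vecs r" unfolding tuple_def vecs_def by simp
  have "tuple r T \<psi> = tuple r T f" unfolding tuple_def using ip by auto
  then have R0: "R (tuple r T \<psi>) (tuple r T f) = 0" using R tv unfolding CF_eps_def CF_def by auto
  have "R (tuple r T \<phi>) (tuple r T f) \<le> R (tuple r T \<psi>) (tuple r T f) + ennreal e"
    using am psi unfolding argmin_eps_def by blast
  then have "R (tuple r T \<phi>) (tuple r T f) \<le> ennreal e" using R0 by simp
  then have "linf r (\<lambda>i. tuple r T \<phi> i - tuple r T f i) \<le> eh" using R tv unfolding CF_eps_def by blast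
  moreover have "\<bar>tuple r T \<phi> k - tuple r T f k\<bar> \<le> linf r (\<lambda>i. tuple r T \<phi> i - tuple r T f i)"
    using linf_ge[OF k, of "\<lambda>i. tuple r T \<phi> i - tuple r T f i"] by simp
  ultimately show ?thesis using yp k unfolding tuple_def by simp
qed

lemma Xi_bad:
  assumes bad: "\<And>\<phi>. \<phi> \<in> NN dims \<Longrightarrow> \<exists>k<r. 1/2 \<le> \<bar>\<phi> (T!k) - L k\<bar>"
    and x: "x \<in> Xi_NN dims R e f r T"
  shows "\<exists>k<r. 1/2 \<le> \<bar>x k - L k\<bar>"
proof -
  obtain \<phi> where xp: "x = tuple r T \<phi>" and am: "\<phi> \<in> NN dims"
    using x unfolding Xi_NN_def argmin_eps_def by blast
  then show ?thesis using bad[OF am] unfolding tuple_def by auto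
qed

definition Oh :: "nat \<Rightarrow> real \<Rightarrow> vec list set" where
  "Oh r \<beta> = TL r \<beta> ` insert 0 (range (\<lambda>m::nat. (1/2::real)^(m+3)))"

lemma dset: "\<delta> \<in> insert 0 (range (\<lambda>m::nat. (1/2::real)^(m+3))) \<Longrightarrow> 0 \<le> \<delta> \<and> \<delta> \<le> 1/8"
proof -
  assume "\<delta> \<in> insert 0 (range (\<lambda>m::nat. (1/2::real)^(m+3)))"
  then consider "\<delta> = 0" | m where "\<delta> = (1/2)^(m+3)" by auto
  then show ?thesis
  proof cases
    case 1 then show ?thesis by simp
  next
    case 2
    have "(1/2::real)^(m+3) \<le> (1/2)^3" by (rule power_decreasing) auto
    moreover have "(1/2::real)^3 = 1/8" by (simp add: power_one_over)
    moreover have "0 \<le> (1/2::real)^(m+3)" by simp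
    ultimately show ?thesis using 2 by linarith
  qed
qed

lemma TL_nth: "k < r \<Longrightarrow> TL r \<beta> \<delta> ! k = pt r \<beta> \<delta> k"
  unfolding TL_def by simp

lemma pwa_aff': "(\<And>k. v k = a + b * t k) \<Longrightarrow> pwa t r C v"
proof -
  assume "\<And>k. v k = a + b * t k"
  then have "v = (\<lambda>k. a + b * t k)" by auto
  then show ?thesis using pwa_affine by simp
qed

lemma PW_pt: "PW (tt r) r {} (pt r \<beta> 0)"
  unfolding PW_def
proof
  fix i
  show "pwa (tt r) r {} (\<lambda>k. pt r \<beta> 0 k i)"
    by (rule pwa_aff'[where a="if i = 0 then 0 else if i = 1 then \<beta> else 0" and b="if i = 0 then 1 else 0"])
       (simp add: pt_def)
qed

lemma main_bd:
  fixes d r :: nat and \<alpha> \<beta> e eh p :: real and dims :: "nat list" and s :: norm_choice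
    and en :: "(nat \<times> nat) \<times> nat \<Rightarrow> nat"
  assumes d2: "2 \<le> d" and al: "\<alpha> < 1/4" and be: "1/2 < \<beta>" "\<beta> < 3/4"
    and len: "3 \<le> length dims" and hd: "hd dims = d" and pos: "\<forall>n\<in>set dims. 1 \<le> n"
    and hr: "3 * (\<Prod>l\<in>{1..<length dims - 1}. dims ! l + 1) \<le> r"
    and eh: "eh < 1/2" and R: "R \<in> CF_eps r e eh"
    and inj: "inj_on en (I_delta (I_NN d r))" and p: "p < 1/2"
  shows "ereal (1/4 - eh/2) \<le> breakdown_PB (Omega_delta (Oh r \<beta>) Lambda_NN (I_NN d r))
           (Xi_delta (Oh r \<beta>) Lambda_NN (I_NN d r) (Xi_NN dims R e (fa d \<alpha>) r))
           (vecs r) (pdist s r) Lambda_delta (I_delta (I_NN d r)) en p"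
proof -
  define f where "f = fa d \<alpha>"
  define I where "I = I_NN d r"
  define \<Omega> where "\<Omega> = Omega_delta (Oh r \<beta>) Lambda_NN I"
  define \<Xi> where "\<Xi> = Xi_delta (Oh r \<beta>) Lambda_NN I (Xi_NN dims R e f r)"
  define T0 where "T0 = TL r \<beta> 0"
  have sett: "\<And>\<delta>. 0 \<le> \<delta> \<Longrightarrow> \<delta> \<le> 1/8 \<Longrightarrow> setting d \<alpha> \<beta> \<delta>"
    unfolding setting_def using d2 al be by auto
  have sub: "Oh r \<beta> \<subseteq> Omega_NN d f r"
    unfolding Oh_def f_def using setting.TL_Omega[OF sett] dset by blast
  have T0in: "T0 \<in> Oh r \<beta>" unfolding T0_def Oh_def by blast
  have hr': "3 * hp dims \<le> r" using hr hp_prod[of dims] by simp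
  have bad0: "\<exists>k<r. 1/2 \<le> \<bar>x k - lab k\<bar>" if x: "x \<in> Xi_NN dims R e f r T0" for x
  proof (rule Xi_bad[OF _ x])
    fix \<phi> assume "\<phi> \<in> NN dims"
    then obtain Ws where Ws: "\<phi> = (\<lambda>x. nn_map dims Ws x 0)" "length Ws = length dims - 1"
      unfolding NN_def by blast
    obtain k where k: "k < r" "1/2 \<le> \<bar>nn_map dims Ws (pt r \<beta> 0 k) 0 - lab k\<bar>"
      using nn_fail[where t="tt r" and r=r, OF tt_mono Ws(2) _ hr' PW_pt] len by auto
    then show "\<exists>k<r. 1/2 \<le> \<bar>\<phi> (T0 ! k) - lab k\<bar>" using Ws(1) TL_nth[of k r \<beta> 0] unfolding T0_def by auto
  qed
  have good: "\<bar>y k - lab k\<bar> \<le> eh" if dp: "0 < \<delta>" "\<delta> \<le> 1/8" and y: "y \<in> Xi_NN dims R e f r (TL r \<beta> \<delta>)"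
    and k: "k < r" for \<delta> y k
  proof -
    define \<psi> where "\<psi> = (\<lambda>x::vec. (1/\<delta>) * max 0 (x 1 - \<beta>))"
    have psi: "\<psi> \<in> NN dims" unfolding \<psi>_def by (rule interp[OF len hd d2 pos])
    have lk: "f (TL r \<beta> \<delta> ! k') = lab k'" if "k' < r" for k'
      using setting.fa_pt[OF sett[of \<delta>] that] dp TL_nth[OF that] unfolding f_def by simp
    have ip: "\<psi> (TL r \<beta> \<delta> ! k') = f (TL r \<beta> \<delta> ! k')" if "k' < r" for k'
      using lk[OF that] TL_nth[OF that] dp unfolding \<psi>_def pt_def lab_def by auto
    show ?thesis using Xi_good[OF R psi ip y k] lk[OF k] by simp
  qed
  have a0: "crep d r T0 \<in> \<Omega>"
    unfolding \<Omega>_def Omega_delta_def I_def using T0in crep_repr by blast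
  have Xi0: "\<Xi> (crep d r T0) = Xi_NN dims R e f r T0"
    unfolding \<Xi>_def I_def by (rule Xi_delta_eval[OF sub T0in crep_repr])
  have member: "ereal e' \<in> {ereal e | e. 0 \<le> e \<and>
      (\<forall>X F P. RGA \<Omega> Lambda_delta (I_delta I) en (vecs r) (pdist s r) X F P \<longrightarrow>
         (\<exists>\<iota>\<in>\<Omega>. p < measure (P \<iota>) {G \<in> X. ereal e < dist_set (pdist s r) (\<Xi> \<iota>) (fst G \<iota>)}))}"
    if e': "0 \<le> e'" "e' < 1/4 - eh/2" for e'
  proof -
    have "\<exists>\<iota>\<in>\<Omega>. p < measure (P \<iota>) {G \<in> X. ereal e' < dist_set (pdist s r) (\<Xi> \<iota>) (fst G \<iota>)}"
      if rga: "RGA \<Omega> Lambda_delta (I_delta I) en (vecs r) (pdist s r) X F P" for X F P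
    proof (rule abstract_bd[OF pdist_tri pdist_sym _ a0 _ _ p rga])
      show "inj_on en (I_delta I)" using inj unfolding I_def .
      show "2 * e' < 1/2 - eh" using e' by simp
    next
      fix S assume finS: "finite S" and SI: "S \<subseteq> I_delta I"
      define M where "M = Max (insert 0 (snd ` S))"
      define \<delta> where "\<delta> = (1/2::real)^(M+3)"
      define TM where "TM = TL r \<beta> \<delta>"
      have dp: "0 < \<delta>" "\<delta> \<le> 1/8" unfolding \<delta>_def using dset[of "(1/2)^(M+3)"] by auto
      have dM: "\<delta> \<le> (1/2)^M" unfolding \<delta>_def by (rule power_decreasing) auto
      have TMin: "TM \<in> Oh r \<beta>" unfolding TM_def Oh_def \<delta>_def by blast
      define a' where "a' = mix d r M T0 TM"
      have rep: "delta_repr Lambda_NN (I_NN d r) TM a'"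
        unfolding a'_def
      proof (rule mix_repr)
        fix k j assume k: "k < r" and j: "j < d"
        show "(T0 ! k) j \<le> (TM ! k) j \<and> (TM ! k) j \<le> (T0 ! k) j + (1/2)^M"
          unfolding T0_def TM_def TL_nth[OF k] pt_def using dp dM by auto
      qed
      have a'in: "a' \<in> \<Omega>" unfolding \<Omega>_def Omega_delta_def I_def using TMin rep by blast
      have agree: "\<forall>j\<in>S. Lambda_delta j a' = Lambda_delta j (crep d r T0)"
      proof
        fix j assume "j \<in> S"
        then have "snd j \<le> M" unfolding M_def using finS by (intro Max_ge) auto
        then show "Lambda_delta j a' = Lambda_delta j (crep d r T0)"
          unfolding Lambda_delta_def a'_def mix_def by simp
      qed
      have XiM: "\<Xi> a' = Xi_NN dims R e f r TM"
        unfolding \<Xi>_def I_def by (rule Xi_delta_eval[OF sub TMin rep])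
      have sep: "\<forall>x\<in>\<Xi> (crep d r T0). \<forall>y\<in>\<Xi> a'. 1/2 - eh \<le> pdist s r x y"
      proof (intro ballI)
        fix x y assume x: "x \<in> \<Xi> (crep d r T0)" and y: "y \<in> \<Xi> a'"
        obtain k where k: "k < r" "1/2 \<le> \<bar>x k - lab k\<bar>" using bad0 x Xi0 by auto
        have yy: "y \<in> Xi_NN dims R e f r (TL r \<beta> \<delta>)" using y XiM unfolding TM_def by simp
        have "\<bar>y k - lab k\<bar> \<le> eh" by (rule good[OF dp yy k(1)])
        moreover have "\<bar>x k - y k\<bar> \<le> pdist s r x y" by (rule pdist_ge[OF k(1)])
        ultimately show "1/2 - eh \<le> pdist s r x y" using k(2) by linarith
      qed
      show "\<exists>a'\<in>\<Omega>. (\<forall>j\<in>S. Lambda_delta j a' = Lambda_delta j (crep d r T0)) \<and>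
               (\<forall>x\<in>\<Xi> (crep d r T0). \<forall>y\<in>\<Xi> a'. 1/2 - eh \<le> pdist s r x y)"
        using a'in agree sep by blast
    qed
    then show ?thesis using e' by blast
  qed
  define Set where "Set = {ereal e | e. 0 \<le> e \<and>
      (\<forall>X F P. RGA \<Omega> Lambda_delta (I_delta I) en (vecs r) (pdist s r) X F P \<longrightarrow>
         (\<exists>\<iota>\<in>\<Omega>. p < measure (P \<iota>) {G \<in> X. ereal e < dist_set (pdist s r) (\<Xi> \<iota>) (fst G \<iota>)}))}"
  have bd: "breakdown_PB \<Omega> \<Xi> (vecs r) (pdist s r) Lambda_delta (I_delta I) en p = Sup Set"
    unfolding breakdown_PB_def Set_def by simp
  have cpos: "0 < 1/4 - eh/2" using eh by simp
  have "ereal (1/4 - eh/2) \<le> Sup Set"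
  proof (rule ccontr)
    assume "\<not> ?thesis"
    then have lt: "Sup Set < ereal (1/4 - eh/2)" by simp
    obtain z where z: "Sup Set < ereal z" "ereal z < ereal (1/4 - eh/2)" using ereal_dense2[OF lt] by blast
    have "ereal 0 \<in> Set" using member[of 0] cpos unfolding Set_def by simp
    then have "ereal 0 \<le> Sup Set" by (rule Sup_upper)
    then have "ereal 0 < ereal z" using z(1) by (rule le_less_trans)
    then have z0: "0 \<le> z" by simp
    have "ereal z \<in> Set" using member[of z] z0 z(2) unfolding Set_def by simp
    then have "ereal z \<le> Sup Set" by (rule Sup_upper)
    then show False using z(1) by simp
  qed
  then show ?thesis using bd unfolding \<Omega>_def \<Xi>_def I_def f_def by simp
qed

lemma Oh_sub: assumes "2 \<le> d" "\<alpha> < 1/4" "1/2 < \<beta>" "\<beta> < 3/4"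
  shows "Oh r \<beta> \<subseteq> Omega_NN d (fa d \<alpha>) r"
proof -
  have sett: "\<And>\<delta>. 0 \<le> \<delta> \<Longrightarrow> \<delta> \<le> 1/8 \<Longrightarrow> setting d \<alpha> \<beta> \<delta>"
    unfolding setting_def using assms by auto
  show ?thesis unfolding Oh_def using setting.TL_Omega[OF sett] dset by blast
qed

lemma Oh_meet: assumes "1 \<le> r" "T \<in> Oh r \<beta>" "T \<in> Oh r \<beta>'" shows "\<beta> = \<beta>'"
proof -
  obtain \<delta> \<delta>' where T: "T = TL r \<beta> \<delta>" "T = TL r \<beta>' \<delta>'" using assms unfolding Oh_def by blast
  have "pt r \<beta> \<delta> 0 = pt r \<beta>' \<delta>' 0" using T TL_nth[of 0 r] assms(1) by (metis less_le_trans zero_less_one)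
  then have "pt r \<beta> \<delta> 0 1 = pt r \<beta>' \<delta>' 0 1" by simp
  then show ?thesis unfolding pt_def by simp
qed

theorem proposition5p26:
  fixes d :: nat
  assumes "2 \<le> d"
  shows "\<exists>C1. uncountable C1 \<and> (\<forall>f\<in>C1. classif d f) \<and>
    (\<forall>f\<in>C1. \<forall>(dims :: nat list) (r :: nat) (e :: real) (eh :: real) R (s :: norm_choice).
       3 \<le> length dims \<and> hd dims = d \<and> last dims = 1 \<and> (\<forall>n\<in>set dims. 1 \<le> n) \<and>
       3 * (\<Prod>l\<in>{1..<length dims - 1}. dims ! l + 1) \<le> r \<and>
       0 < e \<and> 0 < eh \<and> eh < 1/2 \<and> R \<in> CF_eps r e eh \<longrightarrow>
       (\<exists>C3. uncountable C3 \<and> disjoint C3 \<and> (\<forall>\<Omega>h\<in>C3. \<Omega>h \<subseteq> Omega_NN d f r) \<and>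
          (\<forall>\<Omega>h\<in>C3. \<forall>en :: (nat \<times> nat) \<times> nat \<Rightarrow> nat. inj_on en (I_delta (I_NN d r)) \<longrightarrow>
             (\<forall>p. 0 \<le> p \<and> p < 1/2 \<longrightarrow>
                ereal (1/4 - eh/2) \<le>
                breakdown_PB (Omega_delta \<Omega>h Lambda_NN (I_NN d r))
                             (Xi_delta \<Omega>h Lambda_NN (I_NN d r) (Xi_NN dims R e f r))
                             (vecs r) (pdist s r) Lambda_delta (I_delta (I_NN d r)) en p))))"
proof -
  have d2: "2 \<le> d" by (rule assms)
  define C1 where "C1 = fa d ` {0<..<(1/4::real)}"
  have injf: "inj_on (fa d) {0<..<(1/4::real)}"
  proof (rule inj_onI)
    fix \<alpha> \<alpha>' :: real assume a: "\<alpha> \<in> {0<..<1/4}" and a': "\<alpha>' \<in> {0<..<1/4}" and eq: "fa d \<alpha> = fa d \<alpha>'"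
    define x0 :: vec where "x0 = (\<lambda>i. if i = 0 then 1/2 else if i = 1 then \<alpha> else 0)"
    have cube: "x0 \<in> cube d" unfolding cube_def x0_def using a d2 by auto
    have g: "gcl (1/2) = 0" unfolding gcl_def by simp
    have v1: "fa d \<alpha> x0 = 1" unfolding fa_def using cube by (simp add: x0_def)
    show "\<alpha> = \<alpha>'"
    proof (rule ccontr)
      assume ne: "\<alpha> \<noteq> \<alpha>'"
      have "fa d \<alpha>' x0 = 0" unfolding fa_def using cube ne g by (simp add: x0_def)
      then show False using v1 eq by simp
    qed
  qed
  have unc1: "uncountable C1"
  proof
    assume "countable C1"
    then have "countable {0<..<(1/4::real)}" using countable_image_inj_on injf unfolding C1_def by blast
    then show False using uncountable_open_interval[of 0 "1/4::real"] by simp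
  qed
  have cl: "\<forall>f\<in>C1. classif d f"
    unfolding C1_def classif_def fa_def gcl_def by auto
  have main: "\<forall>f\<in>C1. \<forall>(dims :: nat list) (r :: nat) (e :: real) (eh :: real) R (s :: norm_choice).
       3 \<le> length dims \<and> hd dims = d \<and> last dims = 1 \<and> (\<forall>n\<in>set dims. 1 \<le> n) \<and>
       3 * (\<Prod>l\<in>{1..<length dims - 1}. dims ! l + 1) \<le> r \<and>
       0 < e \<and> 0 < eh \<and> eh < 1/2 \<and> R \<in> CF_eps r e eh \<longrightarrow>
       (\<exists>C3. uncountable C3 \<and> disjoint C3 \<and> (\<forall>\<Omega>h\<in>C3. \<Omega>h \<subseteq> Omega_NN d f r) \<and>
          (\<forall>\<Omega>h\<in>C3. \<forall>en :: (nat \<times> nat) \<times> nat \<Rightarrow> nat. inj_on en (I_delta (I_NN d r)) \<longrightarrow>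
             (\<forall>p. 0 \<le> p \<and> p < 1/2 \<longrightarrow>
                ereal (1/4 - eh/2) \<le>
                breakdown_PB (Omega_delta \<Omega>h Lambda_NN (I_NN d r))
                             (Xi_delta \<Omega>h Lambda_NN (I_NN d r) (Xi_NN dims R e f r))
                             (vecs r) (pdist s r) Lambda_delta (I_delta (I_NN d r)) en p)))"
  proof (intro ballI allI impI)
    fix f dims r e eh R s
    assume fC: "f \<in> C1"
    assume h: "3 \<le> length dims \<and> hd dims = d \<and> last dims = 1 \<and> (\<forall>n\<in>set dims. 1 \<le> n) \<and>
       3 * (\<Prod>l\<in>{1..<length dims - 1}. dims ! l + 1) \<le> r \<and>
       0 < e \<and> 0 < eh \<and> eh < 1/2 \<and> R \<in> CF_eps (r::nat) (e::real) eh"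
    obtain \<alpha> where al: "\<alpha> \<in> {0<..<(1/4::real)}" and f: "f = fa d \<alpha>" using fC unfolding C1_def by blast
    have "1 \<le> (\<Prod>l\<in>{1..<length dims - 1}. dims ! l + 1)" by (rule prod_ge_1) simp
    then have r1: "1 \<le> r" using h by linarith
    define C3 where "C3 = Oh r ` {1/2<..<(3/4::real)}"
    have injO: "inj_on (Oh r) {1/2<..<(3/4::real)}"
    proof (rule inj_onI)
      fix \<beta> \<beta>' assume "Oh r \<beta> = Oh r \<beta>'"
      moreover have "TL r \<beta> 0 \<in> Oh r \<beta>" unfolding Oh_def by blast
      ultimately show "\<beta> = \<beta>'" using Oh_meet[OF r1] by metis
    qed
    have unc3: "uncountable C3"
    proof
      assume "countable C3"
      then have "countable {1/2<..<(3/4::real)}" using countable_image_inj_on injO unfolding C3_def by blast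
      then show False using uncountable_open_interval[of "1/2" "3/4::real"] by simp
    qed
    have disj: "disjoint C3"
      unfolding disjoint_def C3_def
    proof (intro ballI impI)
      fix a b assume "a \<in> Oh r ` {1/2<..<(3/4::real)}" "b \<in> Oh r ` {1/2<..<(3/4::real)}" "a \<noteq> b"
      then obtain \<beta> \<beta>' where ab: "a = Oh r \<beta>" "b = Oh r \<beta>'" "\<beta> \<noteq> \<beta>'" by blast
      show "a \<inter> b = {}" using Oh_meet[OF r1] ab by blast
    qed
    have subs: "\<forall>\<Omega>h\<in>C3. \<Omega>h \<subseteq> Omega_NN d f r"
      unfolding C3_def f using Oh_sub[OF d2] al by auto
    have bds: "\<forall>\<Omega>h\<in>C3. \<forall>en :: (nat \<times> nat) \<times> nat \<Rightarrow> nat. inj_on en (I_delta (I_NN d r)) \<longrightarrow>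
             (\<forall>p. 0 \<le> p \<and> p < 1/2 \<longrightarrow>
                ereal (1/4 - eh/2) \<le>
                breakdown_PB (Omega_delta \<Omega>h Lambda_NN (I_NN d r))
                             (Xi_delta \<Omega>h Lambda_NN (I_NN d r) (Xi_NN dims R e f r))
                             (vecs r) (pdist s r) Lambda_delta (I_delta (I_NN d r)) en p)"
    proof (intro ballI allI impI)
      fix \<Omega>h :: "vec list set" and en :: "(nat \<times> nat) \<times> nat \<Rightarrow> nat" and p :: real
      assume "\<Omega>h \<in> C3" and inj: "inj_on en (I_delta (I_NN d r))" and p: "0 \<le> p \<and> p < 1/2"
      then obtain \<beta> where be: "\<beta> \<in> {1/2<..<(3/4::real)}" and O: "\<Omega>h = Oh r \<beta>" unfolding C3_def by blast
      show "ereal (1/4 - eh/2) \<le>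
                breakdown_PB (Omega_delta \<Omega>h Lambda_NN (I_NN d r))
                             (Xi_delta \<Omega>h Lambda_NN (I_NN d r) (Xi_NN dims R e f r))
                             (vecs r) (pdist s r) Lambda_delta (I_delta (I_NN d r)) en p"
        unfolding O f
        by (rule main_bd) (use d2 al be h inj p in auto)
    qed
    show "\<exists>C3. uncountable C3 \<and> disjoint C3 \<and> (\<forall>\<Omega>h\<in>C3. \<Omega>h \<subseteq> Omega_NN d f r) \<and>
          (\<forall>\<Omega>h\<in>C3. \<forall>en :: (nat \<times> nat) \<times> nat \<Rightarrow> nat. inj_on en (I_delta (I_NN d r)) \<longrightarrow>
             (\<forall>p. 0 \<le> p \<and> p < 1/2 \<longrightarrow>
                ereal (1/4 - eh/2) \<le>
                breakdown_PB (Omega_delta \<Omega>h Lambda_NN (I_NN d r))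
                             (Xi_delta \<Omega>h Lambda_NN (I_NN d r) (Xi_NN dims R e f r))
                             (vecs r) (pdist s r) Lambda_delta (I_delta (I_NN d r)) en p))"
      using unc3 disj subs bds by blast
  qed
  show ?thesis using unc1 cl main by blast
qed

end
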